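(* There is a constant $K\leqslant\frac{\pi^2}{6}$ with the following properties. (a) $\|z\|_{\pi,n}\leqslant 2K\|z\|_{ah,2n+1}$ for every $n\in\mathbb{N}$ and every $z\in\mathcal{S}\otimes\mathcal{S}$. (b) For every continuous bilinear form $u\colon\mathcal{S}\times\mathcal{S}\to\mathbb{C}$, every $n,m\in\mathbb{N}$ and all $x_1,\dots,x_m,y_1,\dots,y_m\in\mathcal{S}$, \[\Big|\sum_{j=1}^mu(x_j,y_j)\Big|\leqslant K\|u\|_n^*\,\|(x_j)\|_{2n+1}^{rc}\,\|(y_j)\|_{2n+1}^{rc}.\] (c) In particular, for every $\phi\in\mathcal{S}'$, every $n,m\in\mathbb{N}$ and all $x_1,\dots,x_m\in\mathcal{S}$, \[\sum_{j=1}^m|\phi(x_j)|^2\leqslant K\big(\|\phi\|_n^*\,\|(x_j)\|_{2n+1}^{rc}\big)^2.\]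
   Context: Let $\mathbb{N}=\{1,2,\dots\}$. Let $s$ be the space of complex sequences $\xi=(\xi_j)_{j\geqslant1}$ with $|\xi|_n:=(\sum_{j}|\xi_j|^2j^{2n})^{1/2}<\infty$ for all $n\in\mathbb{N}$, and let $s'$ be its dual, the space of sequences $\eta$ with $|\eta|_n':=(\sum_j|\eta_j|^2j^{-2n})^{1/2}<\infty$ for some $n$, with pairing $\langle\xi,\eta\rangle=\sum_j\xi_j\overline{\eta_j}$. The noncommutative Schwartz space $\mathcal{S}=L(s',s)$ is the Fréchet space of continuous linear operators $s'\to s$ with the topology of uniform convergence on bounded sets; it is a $*$-algebra with product $xy:=x\circ\iota\circ y$ ($\iota\colon s\hookrightarrow s'$ the inclusion) and involution given by $\langle x^*\xi,\eta\rangle=\langle\xi,x\eta\rangle$; $\mathcal{S}'$ is its topological dual. For $n\in\mathbb{N}$ and $x\in\mathcal{S}$, $\|x\|_n:=\sup\{|x\xi|_n\colon \xi\in s',\ |\xi|_n'\leqslant1\}$. For a continuous bilinear form $u$, $\|u\|_n^*:=\sup\{|u(x,y)|\colon\|x\|_n\leqslant1,\|y\|_n\leqslant1\}$, and for $\phi\in\mathcal{S}'$, $\|\phi\|_n^*:=\sup\{|\phi(x)|\colon\|x\|_n\leqslant1\}$. For $x_1,\dots,x_m\in\mathcal{S}$ and $k\in\mathbb{N}$, $\|(x_j)\|_k^{rc}:=\max\{\|\sum_jx_j^*x_j\|_k^{1/2},\|\sum_jx_jx_j^*\|_k^{1/2}\}$. On the algebraic tensor product $\mathcal{S}\otimes\mathcal{S}$: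 $\|z\|_{\pi,n}:=\inf\sum_j\|x_j\|_n\|y_j\|_n$ and $\|z\|_{ah,n}:=\inf\|\sum_j|x_j|^2\|_n^{1/2}\|\sum_j|y_j|^2\|_n^{1/2}$, where $|x|^2:=\frac12(x^*x+xx^* )$ and both infima run over all representations $z=\sum_{j=1}^mx_j\otimes y_j$. *)

theory Defs
  imports Complex_Main "HOL-Library.Extended_Real" "HOL-Library.Function_Algebras"
begin

text \<open>Index convention: the paper's index j \<in> {1,2,...} is represented by the
  natural number j-1, so the weight j^n becomes (Suc j)^n.\<close>

type_synonym seq = "nat \<Rightarrow> complex"
type_synonym mat = "nat \<Rightarrow> nat \<Rightarrow> complex"

definition s_sum :: "nat \<Rightarrow> seq \<Rightarrow> (nat \<Rightarrow> real)" where
  "s_sum n \<xi> = (\<lambda>j. (cmod (\<xi> j))\<^sup>2 * real (Suc j) ^ (2*n))"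

definition sd_sum :: "nat \<Rightarrow> seq \<Rightarrow> (nat \<Rightarrow> real)" where
  "sd_sum n \<eta> = (\<lambda>j. (cmod (\<eta> j))\<^sup>2 / real (Suc j) ^ (2*n))"

definition s_space :: "seq set" where
  "s_space = {\<xi>. \<forall>n\<ge>1. summable (s_sum n \<xi>)}"

definition s_dual :: "seq set" where
  "s_dual = {\<eta>. \<exists>n\<ge>1. summable (sd_sum n \<eta>)}"

definition snorm :: "nat \<Rightarrow> seq \<Rightarrow> real" where
  "snorm n \<xi> = sqrt (\<Sum>j. s_sum n \<xi> j)"

definition sdnorm :: "nat \<Rightarrow> seq \<Rightarrow> real" where
  "sdnorm n \<eta> = sqrt (\<Sum>j. sd_sum n \<eta> j)"

text \<open>Continuous linear operators s' \<rightarrow> s are identified with their matrices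
  (x_{ij}) (x e_j = (x_{ij})_i); these are exactly the rapidly decreasing matrices.\<close>
definition S_space :: "mat set" where
  "S_space = {x. \<forall>n. \<exists>C. \<forall>i j. cmod (x i j) * real (Suc i) ^ n * real (Suc j) ^ n \<le> C}"

definition act :: "mat \<Rightarrow> seq \<Rightarrow> seq" where
  "act x \<xi> = (\<lambda>i. \<Sum>j. x i j * \<xi> j)"

text \<open>Product xy = x \<circ> \<iota> \<circ> y and involution.\<close>
definition mmult :: "mat \<Rightarrow> mat \<Rightarrow> mat" where
  "mmult x y = (\<lambda>i k. \<Sum>j. x i j * y j k)"

definition madj :: "mat \<Rightarrow> mat" where
  "madj x = (\<lambda>i j. cnj (x j i))"

definition Snorm :: "nat \<Rightarrow> mat \<Rightarrow> real" where
  "Snorm n x = Sup {snorm n (act x \<xi>) | \<xi>. \<xi> \<in> s_dual \<and> summable (sd_sum n \<xi>) \<and> sdnorm n \<xi> \<le> 1}"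

definition msq :: "mat \<Rightarrow> mat" where
  "msq x = (\<lambda>i j. (mmult (madj x) x i j + mmult x (madj x) i j) / 2)"

definition rcnorm :: "nat \<Rightarrow> nat \<Rightarrow> (nat \<Rightarrow> mat) \<Rightarrow> real" where
  "rcnorm k m x = max (sqrt (Snorm k (\<Sum>j\<in>{1..m}. mmult (madj (x j)) (x j))))
                      (sqrt (Snorm k (\<Sum>j\<in>{1..m}. mmult (x j) (madj (x j)))))"

text \<open>Continuous (bi)linear forms on S. The Fr\'echet topology of S is given by the
  increasing norms \<parallel>.\<parallel>_n.\<close>
definition cont_bilinear :: "(mat \<Rightarrow> mat \<Rightarrow> complex) \<Rightarrow> bool" where
  "cont_bilinear u \<longleftrightarrow>
     (\<forall>x\<in>S_space. \<forall>x'\<in>S_space. \<forall>y\<in>S_space. \<forall>c::complex.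
        u (x + x') y = u x y + u x' y \<and> u y (x + x') = u y x + u y x' \<and>
        u (\<lambda>i j. c * x i j) y = c * u x y \<and> u y (\<lambda>i j. c * x i j) = c * u y x) \<and>
     (\<exists>n\<ge>1. \<exists>C. \<forall>x\<in>S_space. \<forall>y\<in>S_space. cmod (u x y) \<le> C * Snorm n x * Snorm n y)"

definition S_dual :: "(mat \<Rightarrow> complex) set" where
  "S_dual = {\<phi>. (\<forall>x\<in>S_space. \<forall>y\<in>S_space. \<forall>c::complex.
        \<phi> (x + y) = \<phi> x + \<phi> y \<and> \<phi> (\<lambda>i j. c * x i j) = c * \<phi> x) \<and>
     (\<exists>n\<ge>1. \<exists>C. \<forall>x\<in>S_space. cmod (\<phi> x) \<le> C * Snorm n x)}"

definition bnorm_star :: "nat \<Rightarrow> (mat \<Rightarrow> mat \<Rightarrow> complex) \<Rightarrow> ereal" where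
  "bnorm_star n u = Sup {ereal (cmod (u x y)) | x y. x \<in> S_space \<and> y \<in> S_space \<and>
                           Snorm n x \<le> 1 \<and> Snorm n y \<le> 1}"

definition fnorm_star :: "nat \<Rightarrow> (mat \<Rightarrow> complex) \<Rightarrow> ereal" where
  "fnorm_star n \<phi> = Sup {ereal (cmod (\<phi> x)) | x. x \<in> S_space \<and> Snorm n x \<le> 1}"

text \<open>Algebraic tensor product S \<otimes> S, realised (injectively) as kernels on
  (\<nat>\<times>\<nat>)\<times>(\<nat>\<times>\<nat>): x \<otimes> y = ((i,j),(k,l)) \<mapsto> x_{ij} y_{kl}.\<close>
type_synonym tens = "nat \<times> nat \<Rightarrow> nat \<times> nat \<Rightarrow> complex"

definition tensor :: "mat \<Rightarrow> mat \<Rightarrow> tens" where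
  "tensor x y = (\<lambda>(i,j) (k,l). x i j * y k l)"

definition reps :: "tens \<Rightarrow> (nat \<times> (nat \<Rightarrow> mat) \<times> (nat \<Rightarrow> mat)) set" where
  "reps z = {(m, x, y). (\<forall>j\<in>{1..m}. x j \<in> S_space \<and> y j \<in> S_space) \<and>
                       z = (\<Sum>j\<in>{1..m}. tensor (x j) (y j))}"

definition SS_tensor :: "tens set" where
  "SS_tensor = {z. reps z \<noteq> {}}"

definition pi_norm :: "nat \<Rightarrow> tens \<Rightarrow> real" where
  "pi_norm n z = Inf {(\<Sum>j\<in>{1..m}. Snorm n (x j) * Snorm n (y j)) | m x y. (m, x, y) \<in> reps z}"

definition ah_norm :: "nat \<Rightarrow> tens \<Rightarrow> real" where
  "ah_norm n z = Inf {sqrt (Snorm n (\<Sum>j\<in>{1..m}. msq (x j))) * sqrt (Snorm n (\<Sum>j\<in>{1..m}. msq (y j)))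
                      | m x y. (m, x, y) \<in> reps z}"

end

theory Submission
  imports Defs "HOL-Analysis.Analysis"
begin


lemma sum_fun_apply2: "(\<Sum>j\<in>F. f j) x = (\<Sum>j\<in>F. f j x)"
  by (induction F rule: infinite_finite_induct) auto

lemma basel_summable: "summable (\<lambda>n. 1 / (real (Suc n))\<^sup>2)"
  using inverse_squares_sums by (simp add: sums_iff add.commute)

lemma basel_sum: "(\<Sum>n. 1 / (real (Suc n))\<^sup>2) = pi\<^sup>2 / 6"
  using inverse_squares_sums by (simp add: sums_iff add.commute)

lemma basel_partial: "(\<Sum>n<N. 1 / (real (Suc n))\<^sup>2) \<le> pi\<^sup>2 / 6"
  using sum_le_suminf[OF basel_summable, of "{..<N}"] basel_sum by simp

lemma pow_mono1: "(a::nat) \<le> b \<Longrightarrow> real (Suc i) ^ a \<le> real (Suc i) ^ b"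
  by (rule power_increasing) auto

lemma S_weights:
  assumes "x \<in> S_space"
  shows "\<exists>C. \<forall>i j. cmod (x i j) * real (Suc i) ^ a * real (Suc j) ^ b \<le> C"
proof -
  obtain C where C: "\<forall>i j. cmod (x i j) * real (Suc i) ^ max a b * real (Suc j) ^ max a b \<le> C"
    using assms unfolding S_space_def by blast
  have "cmod (x i j) * real (Suc i) ^ a * real (Suc j) ^ b \<le> C" for i j
  proof -
    have "cmod (x i j) * real (Suc i) ^ a * real (Suc j) ^ b
        \<le> cmod (x i j) * real (Suc i) ^ max a b * real (Suc j) ^ max a b"
      by (intro mult_mono pow_mono1) auto
    with C show ?thesis by (meson order_trans)
  qed
  thus ?thesis by blast
qed

lemma S_spaceI:
  assumes "\<And>n. \<exists>C. \<forall>i j. cmod (x i j) * real (Suc i) ^ n * real (Suc j) ^ n \<le> C"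
  shows "x \<in> S_space"
  using assms unfolding S_space_def by blast

lemma S_zero: "(0::mat) \<in> S_space"
  by (rule S_spaceI) auto

lemma S_scale: "x \<in> S_space \<Longrightarrow> (\<lambda>i j. c * x i j) \<in> S_space"
proof (rule S_spaceI)
  fix n assume "x \<in> S_space"
  then obtain C where C: "\<forall>i j. cmod (x i j) * real (Suc i) ^ n * real (Suc j) ^ n \<le> C"
    using S_weights by blast
  have "cmod (c * x i j) * real (Suc i) ^ n * real (Suc j) ^ n \<le> cmod c * C" for i j
    using mult_left_mono[OF C[rule_format, of i j], of "cmod c"]
    by (simp add: norm_mult mult.assoc)
  thus "\<exists>C. \<forall>i j. cmod (c * x i j) * real (Suc i) ^ n * real (Suc j) ^ n \<le> C" by blast
qed

lemma S_add: "x \<in> S_space \<Longrightarrow> y \<in> S_space \<Longrightarrow> x + y \<in> S_space"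
proof (rule S_spaceI)
  fix n assume "x \<in> S_space" "y \<in> S_space"
  then obtain C D where C: "\<forall>i j. cmod (x i j) * real (Suc i) ^ n * real (Suc j) ^ n \<le> C"
    and D: "\<forall>i j. cmod (y i j) * real (Suc i) ^ n * real (Suc j) ^ n \<le> D"
    using S_weights[of x n n] S_weights[of y n n] by blast
  have "cmod ((x + y) i j) * real (Suc i) ^ n * real (Suc j) ^ n \<le> C + D" for i j
  proof -
    let ?w = "real (Suc i) ^ n * real (Suc j) ^ n"
    have w: "0 \<le> ?w" by simp
    have "cmod ((x + y) i j) * ?w \<le> (cmod (x i j) + cmod (y i j)) * ?w"
      by (rule mult_right_mono[OF _ w]) (simp add: norm_triangle_ineq)
    also have "\<dots> = cmod (x i j) * ?w + cmod (y i j) * ?w"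
      by (rule distrib_right)
    also have "\<dots> \<le> C + D" using C[rule_format, of i j] D[rule_format, of i j]
      by (simp only: mult.assoc)
    finally show ?thesis by (simp only: mult.assoc)
  qed
  thus "\<exists>C. \<forall>i j. cmod ((x + y) i j) * real (Suc i) ^ n * real (Suc j) ^ n \<le> C" by blast
qed

lemma S_sum: "(\<And>j. j \<in> F \<Longrightarrow> x j \<in> S_space) \<Longrightarrow> (\<Sum>j\<in>F. x j) \<in> S_space"
proof (induction F rule: infinite_finite_induct)
  case (infinite F) then show ?case by (metis S_zero sum.infinite)
next
  case empty then show ?case using S_zero by (simp only: sum.empty)
next
  case (insert a F)
  have e: "sum x (insert a F) = x a + sum x F" by (rule sum.insert[OF insert(1,2)])
  show ?case unfolding e by (rule S_add) (use insert in auto)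
qed

lemma S_madj: "x \<in> S_space \<Longrightarrow> madj x \<in> S_space"
proof (rule S_spaceI)
  fix n assume "x \<in> S_space"
  then obtain C where C: "\<forall>i j. cmod (x i j) * real (Suc i) ^ n * real (Suc j) ^ n \<le> C"
    using S_weights by blast
  have "cmod (madj x i j) * real (Suc i) ^ n * real (Suc j) ^ n \<le> C" for i j
    using C[rule_format, of j i] by (simp add: madj_def mult_ac)
  thus "\<exists>C. \<forall>i j. cmod (madj x i j) * real (Suc i) ^ n * real (Suc j) ^ n \<le> C" by blast
qed

lemma mmult_bound:
  assumes "x \<in> S_space" "y \<in> S_space"
  shows "\<exists>C. \<forall>i k. summable (\<lambda>j. x i j * y j k) \<and>
            cmod (mmult x y i k) * real (Suc i) ^ n * real (Suc k) ^ n \<le> C"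
proof -
  obtain C1 where C1: "\<forall>i j. cmod (x i j) * real (Suc i) ^ n * real (Suc j) ^ 2 \<le> C1"
    using S_weights[OF assms(1)] by blast
  obtain C2 where C2: "\<forall>j k. cmod (y j k) * real (Suc j) ^ 0 * real (Suc k) ^ n \<le> C2"
    using S_weights[OF assms(2)] by blast
  have C2pos: "0 \<le> C2"
  proof -
    have "0 \<le> cmod (y 0 0) * real (Suc 0) ^ 0 * real (Suc 0) ^ n" by simp
    thus ?thesis using C2[rule_format, of 0 0] by linarith
  qed
  have C1pos: "0 \<le> C1"
  proof -
    have "0 \<le> cmod (x 0 0) * real (Suc 0) ^ n * real (Suc 0) ^ 2" by simp
    thus ?thesis using C1[rule_format, of 0 0] by linarith
  qed
  have key: "norm (x i j * y j k) * (real (Suc i) ^ n * real (Suc k) ^ n)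
      \<le> C1 * C2 * (1 / (real (Suc j))\<^sup>2)" for i j k
  proof -
    have a: "cmod (x i j) * real (Suc i) ^ n \<le> C1 / (real (Suc j))\<^sup>2"
      using C1[rule_format, of i j] by (simp add: field_simps)
    have b: "cmod (y j k) * real (Suc k) ^ n \<le> C2" using C2[rule_format, of j k] by simp
    have "norm (x i j * y j k) * (real (Suc i) ^ n * real (Suc k) ^ n)
       = (cmod (x i j) * real (Suc i) ^ n) * (cmod (y j k) * real (Suc k) ^ n)"
      by (simp add: norm_mult mult_ac)
    also have "\<dots> \<le> (C1 / (real (Suc j))\<^sup>2) * C2"
      by (rule mult_mono[OF a b]) (use C1pos in auto)
    finally show ?thesis by simp
  qed
  have pos: "0 < real (Suc i) ^ n * real (Suc k) ^ n" for i k by simp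
  have nb: "norm (x i j * y j k) \<le> C1 * C2 / (real (Suc i) ^ n * real (Suc k) ^ n) * (1 / (real (Suc j))\<^sup>2)" for i j k
  proof -
    have "norm (x i j * y j k) \<le> C1 * C2 * (1 / (real (Suc j))\<^sup>2) / (real (Suc i) ^ n * real (Suc k) ^ n)"
      using key[of i j k] pos[of i k] by (subst pos_le_divide_eq) auto
    thus ?thesis by (simp add: mult_ac)
  qed
  have gs: "summable (\<lambda>j. C1 * C2 / (real (Suc i) ^ n * real (Suc k) ^ n) * (1 / (real (Suc j))\<^sup>2))" for i k
    by (intro summable_mult basel_summable)
  have sm: "summable (\<lambda>j. x i j * y j k)" for i k
    by (rule summable_comparison_test'[OF gs]) (use nb in auto)
  have "cmod (mmult x y i k) * real (Suc i) ^ n * real (Suc k) ^ n \<le> C1 * C2 * (pi\<^sup>2/6)" for i k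
  proof -
    have "cmod (mmult x y i k) \<le> (\<Sum>j. C1 * C2 / (real (Suc i) ^ n * real (Suc k) ^ n) * (1 / (real (Suc j))\<^sup>2))"
      unfolding mmult_def by (rule norm_suminf_le[OF nb gs])
    also have "\<dots> = C1 * C2 / (real (Suc i) ^ n * real (Suc k) ^ n) * (pi\<^sup>2/6)"
      by (subst suminf_mult[OF basel_summable]) (simp only: basel_sum)
    also have "\<dots> = C1 * C2 * (pi\<^sup>2/6) / (real (Suc i) ^ n * real (Suc k) ^ n)"
      by simp
    finally have "cmod (mmult x y i k) * (real (Suc i) ^ n * real (Suc k) ^ n) \<le> C1 * C2 * (pi\<^sup>2/6)"
      using pos[of i k] by (subst (asm) pos_le_divide_eq) auto
    thus ?thesis by (simp add: mult.assoc)
  qed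
  with sm show ?thesis by blast
qed

lemma S_mmult: "x \<in> S_space \<Longrightarrow> y \<in> S_space \<Longrightarrow> mmult x y \<in> S_space"
  by (rule S_spaceI) (use mmult_bound in blast)

lemma mmult_summable: "x \<in> S_space \<Longrightarrow> y \<in> S_space \<Longrightarrow> summable (\<lambda>j. x i j * y j k)"
  using mmult_bound[of x y 0] by blast

lemma S_msq: "x \<in> S_space \<Longrightarrow> msq x \<in> S_space"
proof -
  assume x: "x \<in> S_space"
  have "msq x = (\<lambda>i j. (1/2) * (mmult (madj x) x + mmult x (madj x)) i j)"
    by (simp add: msq_def)
  thus ?thesis using x by (metis S_scale S_add S_mmult S_madj)
qed



definition T :: "nat \<Rightarrow> mat \<Rightarrow> nat \<Rightarrow> real" where
  "T n x I = (\<Sum>i<I. \<Sum>l<I. (cmod (x i l))\<^sup>2 * real (Suc i) ^ (2*n) * real (Suc l) ^ (2*n))"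

definition SNset :: "nat \<Rightarrow> mat \<Rightarrow> real set" where
  "SNset n x = {snorm n (act x \<xi>) | \<xi>. \<xi> \<in> s_dual \<and> summable (sd_sum n \<xi>) \<and> sdnorm n \<xi> \<le> 1}"

lemma Snorm_eq: "Snorm n x = Sup (SNset n x)"
  by (simp add: Snorm_def SNset_def)

lemma sq_le_from:
  fixes t s C :: real
  assumes "0 \<le> t" "0 < s" "t * s \<le> C"
  shows "t\<^sup>2 \<le> C\<^sup>2 * (1 / s\<^sup>2)"
proof -
  have "t \<le> C / s" using assms by (simp add: pos_le_divide_eq)
  hence "t\<^sup>2 \<le> (C / s)\<^sup>2" using assms(1) by (intro power_mono)
  thus ?thesis by (simp add: power_divide)
qed

lemma double_sum_mono:
  fixes f :: "nat \<Rightarrow> nat \<Rightarrow> real"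
  assumes "\<And>i j. 0 \<le> f i j" "I \<le> M" "J \<le> M"
  shows "(\<Sum>i<I. \<Sum>j<J. f i j) \<le> (\<Sum>i<M. \<Sum>j<M. f i j)"
proof -
  have "(\<Sum>i<I. \<Sum>j<J. f i j) \<le> (\<Sum>i<I. \<Sum>j<M. f i j)"
    by (intro sum_mono sum_mono2) (use assms in auto)
  also have "\<dots> \<le> (\<Sum>i<M. \<Sum>j<M. f i j)"
    by (intro sum_mono2) (use assms in \<open>auto intro: sum_nonneg\<close>)
  finally show ?thesis .
qed

lemma T_nonneg: "0 \<le> T n x I"
  unfolding T_def by (intro sum_nonneg) auto

lemma T_mono: "I \<le> I' \<Longrightarrow> T n x I \<le> T n x I'"
  unfolding T_def by (rule double_sum_mono) auto

lemma T_exists: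
  assumes "x \<in> S_space"
  shows "\<exists>U. \<forall>I. T n x I \<le> U"
proof -
  obtain C where C: "\<forall>i l. cmod (x i l) * real (Suc i) ^ (n+1) * real (Suc l) ^ (n+1) \<le> C"
    using S_weights[OF assms, of "n+1" "n+1"] by blast
  have b: "(cmod (x i l))\<^sup>2 * real (Suc i) ^ (2*n) * real (Suc l) ^ (2*n)
        \<le> C\<^sup>2 * ((1 / (real (Suc i))\<^sup>2) * (1 / (real (Suc l))\<^sup>2))" for i l
  proof -
    let ?t = "cmod (x i l) * real (Suc i) ^ n * real (Suc l) ^ n"
    have "?t * (real (Suc i) * real (Suc l)) \<le> C"
      using C[rule_format, of i l] by (simp add: mult_ac)
    hence "?t\<^sup>2 \<le> C\<^sup>2 * (1 / (real (Suc i) * real (Suc l))\<^sup>2)"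
      by (intro sq_le_from) auto
    moreover have "?t\<^sup>2 = (cmod (x i l))\<^sup>2 * real (Suc i) ^ (2*n) * real (Suc l) ^ (2*n)"
      by (simp add: power_mult_distrib power_mult[symmetric] mult_ac)
    moreover have "1 / (real (Suc i) * real (Suc l))\<^sup>2 = (1 / (real (Suc i))\<^sup>2) * (1 / (real (Suc l))\<^sup>2)"
      by (simp add: power_mult_distrib power_divide)
    ultimately show ?thesis by metis
  qed
  have "T n x I \<le> C\<^sup>2 * ((pi\<^sup>2/6) * (pi\<^sup>2/6))" for I
  proof -
    have "T n x I \<le> (\<Sum>i<I. \<Sum>l<I. C\<^sup>2 * ((1 / (real (Suc i))\<^sup>2) * (1 / (real (Suc l))\<^sup>2)))"
      unfolding T_def by (intro sum_mono b)
    also have "\<dots> = C\<^sup>2 * (\<Sum>i<I. \<Sum>l<I. (1 / (real (Suc i))\<^sup>2) * (1 / (real (Suc l))\<^sup>2))"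
      by (simp only: sum_distrib_left)
    also have "\<dots> = C\<^sup>2 * ((\<Sum>i<I. 1 / (real (Suc i))\<^sup>2) * (\<Sum>l<I. 1 / (real (Suc l))\<^sup>2))"
      by (simp only: sum_product)
    also have "\<dots> \<le> C\<^sup>2 * ((pi\<^sup>2/6) * (pi\<^sup>2/6))"
      by (intro mult_left_mono mult_mono basel_partial) (auto intro: sum_nonneg)
    finally show ?thesis .
  qed
  thus ?thesis by blast
qed

lemma pq_le: "0 \<le> p \<Longrightarrow> 0 \<le> q \<Longrightarrow> p * q \<le> p\<^sup>2 + (q::real)\<^sup>2"
proof -
  assume a: "0 \<le> p" "0 \<le> q"
  have h1: "0 \<le> (p - q) * (p - q)" by simp
  have h2: "0 \<le> p * q" using a by simp
  have "(p - q) * (p - q) = p * p + q * q - 2 * (p * q)" by (simp add: algebra_simps)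
  with h1 h2 have "p * q \<le> p * p + q * q" by linarith
  thus ?thesis by (simp add: power2_eq_square)
qed

lemma act_summable:
  assumes "x \<in> S_space" "summable (sd_sum n \<xi>)"
  shows "summable (\<lambda>j. x i j * \<xi> j)"
proof -
  obtain C where C: "\<forall>i j. cmod (x i j) * real (Suc i) ^ 0 * real (Suc j) ^ (n+1) \<le> C"
    using S_weights[OF assms(1), of 0 "n+1"] by blast
  have nb: "norm (x i j * \<xi> j) \<le> C\<^sup>2 * (1 / (real (Suc j))\<^sup>2) + sd_sum n \<xi> j" for j
  proof -
    let ?p = "cmod (x i j) * real (Suc j) ^ n"
    let ?q = "cmod (\<xi> j) / real (Suc j) ^ n"
    have "norm (x i j * \<xi> j) = ?p * ?q" by (simp add: norm_mult)
    also have "\<dots> \<le> ?p\<^sup>2 + ?q\<^sup>2" by (rule pq_le) auto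
    also have "?p\<^sup>2 \<le> C\<^sup>2 * (1 / (real (Suc j))\<^sup>2)"
      by (rule sq_le_from) (use C[rule_format, of i j] in \<open>auto simp: mult_ac\<close>)
    also have "?q\<^sup>2 = sd_sum n \<xi> j"
      by (simp add: sd_sum_def power_divide power_mult[symmetric] mult.commute)
    finally show ?thesis by simp
  qed
  show ?thesis
    by (rule summable_comparison_test'[OF summable_add[OF summable_mult[OF basel_summable] assms(2)]])
       (use nb in auto)
qed



lemma sd_partial_le:
  assumes "summable (sd_sum n \<xi>)" "sdnorm n \<xi> \<le> 1"
  shows "(\<Sum>j<J. sd_sum n \<xi> j) \<le> 1"
proof -
  have nn: "0 \<le> sd_sum n \<xi> j" for j by (simp add: sd_sum_def)
  have "(\<Sum>j<J. sd_sum n \<xi> j) \<le> suminf (sd_sum n \<xi>)"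
    by (rule sum_le_suminf[OF assms(1)]) (auto simp: nn)
  moreover have "suminf (sd_sum n \<xi>) \<le> 1"
  proof -
    have s0: "0 \<le> suminf (sd_sum n \<xi>)" by (rule suminf_nonneg[OF assms(1) nn])
    have "sqrt (suminf (sd_sum n \<xi>)) \<le> 1" using assms(2) by (simp add: sdnorm_def)
    thus ?thesis using s0 by simp
  qed
  ultimately show ?thesis by linarith
qed

lemma finite_cs:
  assumes "summable (sd_sum n \<xi>)" "sdnorm n \<xi> \<le> 1"
  shows "(cmod (\<Sum>j<J. x i j * \<xi> j))\<^sup>2 \<le> (\<Sum>j<J. (cmod (x i j))\<^sup>2 * real (Suc j) ^ (2*n))"
proof -
  define p where "p j = cmod (x i j) * real (Suc j) ^ n" for j
  define q where "q j = cmod (\<xi> j) / real (Suc j) ^ n" for j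
  have pq: "cmod (x i j * \<xi> j) = p j * q j" for j
    by (simp add: p_def q_def norm_mult)
  have "cmod (\<Sum>j<J. x i j * \<xi> j) \<le> (\<Sum>j<J. p j * q j)"
    unfolding pq[symmetric] by (rule norm_sum)
  hence "(cmod (\<Sum>j<J. x i j * \<xi> j))\<^sup>2 \<le> (\<Sum>j<J. p j * q j)\<^sup>2"
    by (intro power_mono) auto
  also have "\<dots> \<le> (\<Sum>j<J. (p j)\<^sup>2) * (\<Sum>j<J. (q j)\<^sup>2)"
    by (rule Cauchy_Schwarz_ineq_sum)
  also have "(\<Sum>j<J. (q j)\<^sup>2) = (\<Sum>j<J. sd_sum n \<xi> j)"
    by (simp add: q_def sd_sum_def power_divide power_mult[symmetric] mult.commute)
  also have "(\<Sum>j<J. (p j)\<^sup>2) = (\<Sum>j<J. (cmod (x i j))\<^sup>2 * real (Suc j) ^ (2*n))"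
    by (simp add: p_def power_mult_distrib power_mult[symmetric] mult.commute)
  also have "(\<Sum>j<J. (cmod (x i j))\<^sup>2 * real (Suc j) ^ (2*n)) * (\<Sum>j<J. sd_sum n \<xi> j)
      \<le> (\<Sum>j<J. (cmod (x i j))\<^sup>2 * real (Suc j) ^ (2*n)) * 1"
    by (intro mult_left_mono sd_partial_le[OF assms] sum_nonneg) auto
  finally show ?thesis by simp
qed

lemma key_bound:
  assumes x: "x \<in> S_space" and s: "summable (sd_sum n \<xi>)" and le: "sdnorm n \<xi> \<le> 1"
    and U: "\<And>I. T n x I \<le> U"
  shows "summable (s_sum n (act x \<xi>)) \<and> suminf (s_sum n (act x \<xi>)) \<le> U"
proof -
  have fin: "(\<Sum>i<I. (cmod (\<Sum>j<J. x i j * \<xi> j))\<^sup>2 * real (Suc i) ^ (2*n)) \<le> U" for I J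
  proof -
    have "(\<Sum>i<I. (cmod (\<Sum>j<J. x i j * \<xi> j))\<^sup>2 * real (Suc i) ^ (2*n))
        \<le> (\<Sum>i<I. (\<Sum>j<J. (cmod (x i j))\<^sup>2 * real (Suc j) ^ (2*n)) * real (Suc i) ^ (2*n))"
      by (intro sum_mono mult_right_mono finite_cs[OF s le]) auto
    also have "\<dots> = (\<Sum>i<I. \<Sum>j<J. (cmod (x i j))\<^sup>2 * real (Suc i) ^ (2*n) * real (Suc j) ^ (2*n))"
      unfolding sum_distrib_right by (intro sum.cong refl) (simp add: mult_ac)
    also have "\<dots> \<le> T n x (max I J)"
      unfolding T_def by (rule double_sum_mono) auto
    also have "\<dots> \<le> U" by (rule U)
    finally show ?thesis .
  qed
  have lim: "(\<lambda>J. \<Sum>i<I. (cmod (\<Sum>j<J. x i j * \<xi> j))\<^sup>2 * real (Suc i) ^ (2*n))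
      \<longlonglongrightarrow> (\<Sum>i<I. (cmod (act x \<xi> i))\<^sup>2 * real (Suc i) ^ (2*n))" for I
  proof -
    have "(\<lambda>J. \<Sum>j<J. x i j * \<xi> j) \<longlonglongrightarrow> act x \<xi> i" for i
      unfolding act_def by (rule summable_LIMSEQ[OF act_summable[OF x s]])
    thus ?thesis by (intro tendsto_intros)
  qed
  have part: "(\<Sum>i<I. s_sum n (act x \<xi>) i) \<le> U" for I
    unfolding s_sum_def
    by (rule LIMSEQ_le_const2[OF lim]) (use fin in auto)
  have nn: "0 \<le> s_sum n (act x \<xi>) i" for i by (simp add: s_sum_def)
  have sm: "summable (s_sum n (act x \<xi>))"
    by (rule summableI_nonneg_bounded[OF nn part])
  moreover have "suminf (s_sum n (act x \<xi>)) \<le> U"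
    by (rule suminf_le_const[OF sm part])
  ultimately show ?thesis by blast
qed

lemma zero_seq_ok: "(\<lambda>_. 0) \<in> s_dual \<and> summable (sd_sum n (\<lambda>_. 0)) \<and> sdnorm n (\<lambda>_. 0) \<le> 1"
proof -
  have z: "sd_sum k (\<lambda>_. 0) = (\<lambda>_. 0)" for k by (simp add: sd_sum_def fun_eq_iff)
  show ?thesis by (auto simp: s_dual_def z sdnorm_def)
qed

lemma SNset_ne: "SNset n x \<noteq> {}"
  unfolding SNset_def using zero_seq_ok by blast

lemma SNsetD:
  assumes "v \<in> SNset n x"
  shows "\<exists>\<xi>. v = snorm n (act x \<xi>) \<and> \<xi> \<in> s_dual \<and> summable (sd_sum n \<xi>) \<and> sdnorm n \<xi> \<le> 1"
  using assms unfolding SNset_def by blast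

lemma Snorm_le:
  assumes x: "x \<in> S_space" and U: "\<And>I. T n x I \<le> U"
  shows "Snorm n x \<le> sqrt U" "bdd_above (SNset n x)"
proof -
  have el: "v \<le> sqrt U" if vin: "v \<in> SNset n x" for v
  proof -
    obtain \<xi> where v: "v = snorm n (act x \<xi>)" and "summable (sd_sum n \<xi>)" "sdnorm n \<xi> \<le> 1"
      using SNsetD[OF vin] by blast
    then have "suminf (s_sum n (act x \<xi>)) \<le> U" using key_bound[OF x _ _ U] by blast
    thus ?thesis unfolding v snorm_def by simp
  qed
  show "Snorm n x \<le> sqrt U" unfolding Snorm_eq by (rule cSup_least[OF SNset_ne el])
  show "bdd_above (SNset n x)" using el by (rule bdd_aboveI)
qed

lemma Snorm_bdd: "x \<in> S_space \<Longrightarrow> bdd_above (SNset n x)"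
proof -
  assume x: "x \<in> S_space"
  obtain U where U: "\<And>I. T n x I \<le> U" using T_exists[OF x] by blast
  show ?thesis using Snorm_le(2)[OF x U] .
qed

lemma Snorm_ge:
  assumes x: "x \<in> S_space" and "summable (sd_sum n \<xi>)" "sdnorm n \<xi> \<le> 1" "\<xi> \<in> s_dual"
  shows "snorm n (act x \<xi>) \<le> Snorm n x"
  unfolding Snorm_eq by (rule cSup_upper[OF _ Snorm_bdd[OF x]]) (use assms in \<open>auto simp: SNset_def\<close>)

lemma single_summable: "summable (\<lambda>j. if j = l then c else (0::'a::real_normed_vector))"
  using sums_single[of l "\<lambda>_. c"] by (auto simp: sums_iff)

lemma single_suminf: "(\<Sum>j. if j = l then c else (0::'a::real_normed_vector)) = c"
  using sums_single[of l "\<lambda>_. c"] by (auto simp: sums_iff)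

lemma entry_le:
  assumes x: "x \<in> S_space"
  shows "cmod (x i l) * real (Suc i) ^ n * real (Suc l) ^ n \<le> Snorm n x"
proof -
  define r where "r = real (Suc l) ^ n"
  have rpos: "0 < r" by (simp add: r_def)
  define \<xi> where "\<xi> = (\<lambda>j. if j = l then complex_of_real r else 0)"
  have sd: "sd_sum k \<xi> = (\<lambda>j. if j = l then r\<^sup>2 / real (Suc l) ^ (2*k) else 0)" for k
    by (auto simp: sd_sum_def \<xi>_def fun_eq_iff)
  have sdn: "sd_sum n \<xi> = (\<lambda>j. if j = l then 1 else 0)"
    unfolding sd by (auto simp: fun_eq_iff r_def power_mult[symmetric] mult.commute)
  have s1: "summable (sd_sum n \<xi>)" unfolding sdn by (rule single_summable)
  have s2: "sdnorm n \<xi> \<le> 1" unfolding sdnorm_def sdn single_suminf by simp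
  have "summable (sd_sum 1 \<xi>)" unfolding sd by (rule single_summable)
  hence s3: "\<xi> \<in> s_dual" unfolding s_dual_def by auto
  have act: "act x \<xi> = (\<lambda>i. x i l * complex_of_real r)"
  proof
    fix i
    have "(\<lambda>j. x i j * \<xi> j) = (\<lambda>j. if j = l then x i l * complex_of_real r else 0)"
      by (auto simp: \<xi>_def fun_eq_iff)
    thus "act x \<xi> i = x i l * complex_of_real r" unfolding act_def by (simp add: single_suminf)
  qed
  obtain U where U: "\<And>I. T n x I \<le> U" using T_exists[OF x] by blast
  have sm: "summable (s_sum n (act x \<xi>))" using key_bound[OF x s1 s2 U] by blast
  have "s_sum n (act x \<xi>) i \<le> suminf (s_sum n (act x \<xi>))"
    using sum_le_suminf[OF sm, of "{i}"] by (simp add: s_sum_def)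
  hence "sqrt (s_sum n (act x \<xi>) i) \<le> snorm n (act x \<xi>)"
    unfolding snorm_def by simp
  also have "\<dots> \<le> Snorm n x" by (rule Snorm_ge[OF x s1 s2 s3])
  also have "sqrt (s_sum n (act x \<xi>) i) = cmod (x i l) * real (Suc i) ^ n * real (Suc l) ^ n"
  proof -
    have "s_sum n (act x \<xi>) i = (cmod (x i l))\<^sup>2 * r\<^sup>2 * real (Suc i) ^ (2*n)"
      using rpos by (simp add: s_sum_def act norm_mult power_mult_distrib)
    also have "r\<^sup>2 = real (Suc l) ^ (2*n)" unfolding r_def by (simp add: power_mult[symmetric] mult.commute)
    also have "(cmod (x i l))\<^sup>2 * real (Suc l) ^ (2*n) * real (Suc i) ^ (2*n)
       = (cmod (x i l) * real (Suc i) ^ n * real (Suc l) ^ n)\<^sup>2"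
      by (simp add: power_mult_distrib power_mult[symmetric] mult.commute mult.left_commute)
    finally have "s_sum n (act x \<xi>) i = (cmod (x i l) * real (Suc i) ^ n * real (Suc l) ^ n)\<^sup>2" .
    thus ?thesis by simp
  qed
  finally show ?thesis by simp
qed

lemma Snorm_nonneg: "x \<in> S_space \<Longrightarrow> 0 \<le> Snorm n x"
proof -
  assume x: "x \<in> S_space"
  have "0 \<le> cmod (x 0 0) * real (Suc 0) ^ n * real (Suc 0) ^ n" by simp
  thus ?thesis using entry_le[OF x, of 0 0 n] by linarith
qed

lemma Snorm_zero_imp:
  assumes "x \<in> S_space" "Snorm n x \<le> 0"
  shows "x = 0"
proof (rule ext, rule ext)
  fix i l
  have "cmod (x i l) * (real (Suc i) ^ n * real (Suc l) ^ n) \<le> 0"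
    using entry_le[OF assms(1), of i l n] assms(2) by (simp add: mult.assoc)
  moreover have "0 < real (Suc i) ^ n * real (Suc l) ^ n" by simp
  ultimately have "cmod (x i l) \<le> 0" using mult_le_cancel_right_pos[of "real (Suc i) ^ n * real (Suc l) ^ n" "cmod (x i l)" 0] by simp
  thus "x i l = 0 i l" by simp
qed

lemma Snorm_scale:
  assumes x: "x \<in> S_space"
  shows "Snorm n (\<lambda>i j. c * x i j) \<le> cmod c * Snorm n x"
proof -
  have el: "v \<le> cmod c * Snorm n x" if vin: "v \<in> SNset n (\<lambda>i j. c * x i j)" for v
  proof -
    obtain \<xi> where v: "v = snorm n (act (\<lambda>i j. c * x i j) \<xi>)" and s: "summable (sd_sum n \<xi>)"
      and le: "sdnorm n \<xi> \<le> 1" and d: "\<xi> \<in> s_dual"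
      using SNsetD[OF vin] by blast
    have a: "act (\<lambda>i j. c * x i j) \<xi> = (\<lambda>i. c * act x \<xi> i)"
    proof
      fix i
      have "(\<Sum>j. c * x i j * \<xi> j) = c * (\<Sum>j. x i j * \<xi> j)"
        using suminf_mult[OF act_summable[OF x s, of i], of c] by (simp add: mult.assoc)
      thus "act (\<lambda>i j. c * x i j) \<xi> i = c * act x \<xi> i" by (simp add: act_def)
    qed
    obtain U where U: "\<And>I. T n x I \<le> U" using T_exists[OF x] by blast
    have sm: "summable (s_sum n (act x \<xi>))" using key_bound[OF x s le U] by blast
    have ss: "s_sum n (\<lambda>i. c * act x \<xi> i) = (\<lambda>i. (cmod c)\<^sup>2 * s_sum n (act x \<xi>) i)"
      by (simp add: s_sum_def fun_eq_iff norm_mult power_mult_distrib mult_ac)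
    have "v = sqrt ((cmod c)\<^sup>2 * suminf (s_sum n (act x \<xi>)))"
      unfolding v a snorm_def ss by (simp add: suminf_mult[OF sm])
    also have "\<dots> = cmod c * snorm n (act x \<xi>)"
      by (simp add: snorm_def real_sqrt_mult)
    also have "\<dots> \<le> cmod c * Snorm n x"
      by (intro mult_left_mono Snorm_ge[OF x s le d]) auto
    finally show ?thesis .
  qed
  show ?thesis unfolding Snorm_eq[of n "\<lambda>i j. c * x i j"] by (rule cSup_least[OF SNset_ne el])
qed



definition colsq :: "mat \<Rightarrow> nat \<Rightarrow> real" where
  "colsq x l = (\<Sum>i. (cmod (x i l))\<^sup>2)"
definition rowsq :: "mat \<Rightarrow> nat \<Rightarrow> real" where
  "rowsq x l = (\<Sum>k. (cmod (x l k))\<^sup>2)"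

lemma col_summable:
  assumes "x \<in> S_space" shows "summable (\<lambda>i. (cmod (x i l))\<^sup>2)"
proof -
  obtain C where C: "\<forall>i l. cmod (x i l) * real (Suc i) ^ 1 * real (Suc l) ^ 0 \<le> C"
    using S_weights[OF assms, of 1 0] by blast
  have "(cmod (x i l))\<^sup>2 \<le> C\<^sup>2 * (1 / (real (Suc i))\<^sup>2)" for i
    by (rule sq_le_from) (use C[rule_format, of i l] in auto)
  thus ?thesis
    by (intro summable_comparison_test'[OF summable_mult[OF basel_summable]]) auto
qed

lemma row_summable:
  assumes "x \<in> S_space" shows "summable (\<lambda>k. (cmod (x l k))\<^sup>2)"
proof -
  obtain C where C: "\<forall>l k. cmod (x l k) * real (Suc l) ^ 0 * real (Suc k) ^ 1 \<le> C"
    using S_weights[OF assms, of 0 1] by blast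
  have "(cmod (x l k))\<^sup>2 \<le> C\<^sup>2 * (1 / (real (Suc k))\<^sup>2)" for k
    by (rule sq_le_from) (use C[rule_format, of l k] in auto)
  thus ?thesis
    by (intro summable_comparison_test'[OF summable_mult[OF basel_summable]]) auto
qed

lemma col_partial: "x \<in> S_space \<Longrightarrow> (\<Sum>i<I. (cmod (x i l))\<^sup>2) \<le> colsq x l"
  unfolding colsq_def by (rule sum_le_suminf[OF col_summable]) auto

lemma row_partial: "x \<in> S_space \<Longrightarrow> (\<Sum>k<I. (cmod (x l k))\<^sup>2) \<le> rowsq x l"
  unfolding rowsq_def by (rule sum_le_suminf[OF row_summable]) auto

lemma amgm_w: "0 \<le> (c::real) \<Longrightarrow> c * a * b \<le> c * (a * a) / 2 + c * (b * b) / 2"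
proof -
  assume c: "0 \<le> c"
  have "0 \<le> c * ((a - b) * (a - b))" using c by simp
  moreover have "c * ((a - b) * (a - b)) = c * (a * a) + c * (b * b) - 2 * (c * a * b)"
    by (simp add: algebra_simps)
  ultimately show ?thesis by linarith
qed

lemma T_split:
  assumes x: "x \<in> S_space"
  shows "T n x I \<le> (\<Sum>l<I. (real (Suc l) ^ (2*n) * real (Suc l) ^ (2*n)) / 2 * (colsq x l + rowsq x l))"
proof -
  define W where "W l = real (Suc l) ^ (2*n)" for l
  define c where "c i l = (cmod (x i l))\<^sup>2" for i l
  have c0: "0 \<le> c i l" for i l by (simp add: c_def)
  have "T n x I = (\<Sum>i<I. \<Sum>l<I. c i l * W i * W l)"
    by (simp add: T_def c_def W_def)
  also have "\<dots> \<le> (\<Sum>i<I. \<Sum>l<I. c i l * (W i * W i) / 2 + c i l * (W l * W l) / 2)"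
    by (intro sum_mono amgm_w c0)
  also have "\<dots> = (\<Sum>i<I. \<Sum>l<I. c i l * (W i * W i) / 2) + (\<Sum>i<I. \<Sum>l<I. c i l * (W l * W l) / 2)"
    by (simp only: sum.distrib)
  also have "(\<Sum>i<I. \<Sum>l<I. c i l * (W i * W i) / 2) = (\<Sum>i<I. (W i * W i) / 2 * (\<Sum>l<I. c i l))"
    by (simp add: sum_distrib_left sum_divide_distrib mult_ac)
  also have "(\<Sum>i<I. \<Sum>l<I. c i l * (W l * W l) / 2) = (\<Sum>l<I. (W l * W l) / 2 * (\<Sum>i<I. c i l))"
    by (subst sum.swap) (simp add: sum_distrib_left sum_divide_distrib mult_ac)
  also have "(\<Sum>i<I. (W i * W i) / 2 * (\<Sum>l<I. c i l)) \<le> (\<Sum>i<I. (W i * W i) / 2 * rowsq x i)"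
    by (intro sum_mono mult_left_mono) (auto simp: c_def row_partial[OF x])
  also have "(\<Sum>l<I. (W l * W l) / 2 * (\<Sum>i<I. c i l)) \<le> (\<Sum>l<I. (W l * W l) / 2 * colsq x l)"
    by (intro sum_mono mult_left_mono) (auto simp: c_def col_partial[OF x])
  finally have "T n x I \<le> (\<Sum>i<I. (W i * W i) / 2 * rowsq x i) + (\<Sum>l<I. (W l * W l) / 2 * colsq x l)"
    by simp
  also have "\<dots> = (\<Sum>l<I. (W l * W l) / 2 * (colsq x l + rowsq x l))"
    by (simp add: sum.distrib[symmetric] algebra_simps add_divide_distrib)
  finally show ?thesis by (simp add: W_def)
qed

lemma core:
  fixes x :: "nat \<Rightarrow> mat" and F :: "nat set" and D :: real
  assumes fin: "finite F" and xS: "\<And>j. j \<in> F \<Longrightarrow> x j \<in> S_space"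
    and Dle: "\<And>l. (\<Sum>j\<in>F. (colsq (x j) l + rowsq (x j) l) / 2) * real (Suc l) ^ (2*n+1) * real (Suc l) ^ (2*n+1) \<le> D"
  shows "\<exists>U. (\<forall>j\<in>F. 0 \<le> U j \<and> Snorm n (x j) \<le> sqrt (U j)) \<and> (\<Sum>j\<in>F. U j) \<le> pi\<^sup>2 / 6 * D"
proof -
  define K :: real where "K = pi\<^sup>2 / 6"
  have cr0: "0 \<le> colsq (x j) l + rowsq (x j) l" if "j \<in> F" for j l
    using suminf_nonneg[OF col_summable[OF xS[OF that]]] suminf_nonneg[OF row_summable[OF xS[OF that]]]
    by (simp add: colsq_def rowsq_def)
  have D0: "0 \<le> D"
  proof -
    have "0 \<le> (\<Sum>j\<in>F. (colsq (x j) 0 + rowsq (x j) 0) / 2) * real (Suc 0) ^ (2*n+1) * real (Suc 0) ^ (2*n+1)"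
      using cr0 by (auto intro!: sum_nonneg)
    thus ?thesis using Dle[of 0] by linarith
  qed
  have wb: "(real (Suc l) ^ (2*n) * real (Suc l) ^ (2*n)) * s \<le> D * (1 / (real (Suc l))\<^sup>2)"
    if "s * real (Suc l) ^ (2*n+1) * real (Suc l) ^ (2*n+1) \<le> D" for s l
  proof -
    have e: "s * real (Suc l) ^ (2*n+1) * real (Suc l) ^ (2*n+1)
        = ((real (Suc l) ^ (2*n) * real (Suc l) ^ (2*n)) * s) * (real (Suc l))\<^sup>2"
      by (simp add: power_add power2_eq_square mult_ac)
    have "((real (Suc l) ^ (2*n) * real (Suc l) ^ (2*n)) * s) \<le> D / (real (Suc l))\<^sup>2"
      using that unfolding e by (subst pos_le_divide_eq) auto
    thus ?thesis by simp
  qed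
  have sumT: "(\<Sum>j\<in>F. T n (x j) I) \<le> K * D" for I
  proof -
    have "(\<Sum>j\<in>F. T n (x j) I)
        \<le> (\<Sum>j\<in>F. \<Sum>l<I. (real (Suc l) ^ (2*n) * real (Suc l) ^ (2*n)) / 2 * (colsq (x j) l + rowsq (x j) l))"
      by (intro sum_mono T_split xS)
    also have "\<dots> = (\<Sum>l<I. (real (Suc l) ^ (2*n) * real (Suc l) ^ (2*n)) * (\<Sum>j\<in>F. (colsq (x j) l + rowsq (x j) l) / 2))"
      by (subst sum.swap) (simp add: sum_distrib_left)
    also have "\<dots> \<le> (\<Sum>l<I. D * (1 / (real (Suc l))\<^sup>2))"
      by (intro sum_mono wb Dle)
    also have "\<dots> = D * (\<Sum>l<I. 1 / (real (Suc l))\<^sup>2)"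
      by (simp add: sum_distrib_left)
    also have "\<dots> \<le> D * K"
      unfolding K_def by (intro mult_left_mono basel_partial D0)
    finally show ?thesis by (simp add: mult.commute)
  qed
  have Tb: "T n (x j) I \<le> K * D" if "j \<in> F" for j I
  proof -
    have "T n (x j) I \<le> (\<Sum>j\<in>F. T n (x j) I)"
      by (rule member_le_sum[OF that _ fin]) (rule T_nonneg)
    thus ?thesis using sumT[of I] by linarith
  qed
  define U where "U j = lim (\<lambda>I. T n (x j) I)" for j
  have inc: "incseq (\<lambda>I. T n (x j) I)" for j
    by (rule incseq_SucI) (rule T_mono, simp)
  have conv: "(\<lambda>I. T n (x j) I) \<longlonglongrightarrow> U j \<and> (\<forall>I. T n (x j) I \<le> U j)" if jF: "j \<in> F" for j
  proof -
    obtain L where L: "(\<lambda>I. T n (x j) I) \<longlonglongrightarrow> L" "\<forall>I. T n (x j) I \<le> L"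
      using incseq_convergent[OF inc[of j], of "K * D"] Tb[OF jF] by blast
    have "U j = L" unfolding U_def using L(1) by (rule limI)
    thus ?thesis using L by simp
  qed
  have P1: "\<forall>j\<in>F. 0 \<le> U j \<and> Snorm n (x j) \<le> sqrt (U j)"
  proof
    fix j assume j: "j \<in> F"
    have "0 \<le> U j" using conv[OF j] T_nonneg[of n "x j" 0] by (meson order_trans)
    moreover have "Snorm n (x j) \<le> sqrt (U j)"
      by (rule Snorm_le(1)[OF xS[OF j]]) (use conv[OF j] in blast)
    ultimately show "0 \<le> U j \<and> Snorm n (x j) \<le> sqrt (U j)" by blast
  qed
  have "(\<lambda>I. \<Sum>j\<in>F. T n (x j) I) \<longlonglongrightarrow> (\<Sum>j\<in>F. U j)"
    by (rule tendsto_sum) (use conv in blast)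
  hence "(\<Sum>j\<in>F. U j) \<le> K * D"
    by (rule LIMSEQ_le_const2) (use sumT in auto)
  with P1 show ?thesis unfolding K_def by blast
qed



lemma adj_diag1:
  assumes "x \<in> S_space" shows "mmult (madj x) x l l = complex_of_real (colsq x l)"
proof -
  have "mmult (madj x) x l l = (\<Sum>i. complex_of_real ((cmod (x i l))\<^sup>2))"
    unfolding mmult_def madj_def complex_norm_square by (simp add: mult.commute)
  also have "\<dots> = complex_of_real (colsq x l)"
    unfolding colsq_def by (rule suminf_of_real[OF col_summable[OF assms], symmetric])
  finally show ?thesis .
qed

lemma adj_diag2:
  assumes "x \<in> S_space" shows "mmult x (madj x) l l = complex_of_real (rowsq x l)"
proof -
  have "mmult x (madj x) l l = (\<Sum>k. complex_of_real ((cmod (x l k))\<^sup>2))"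
    unfolding mmult_def madj_def complex_norm_square by simp
  also have "\<dots> = complex_of_real (rowsq x l)"
    unfolding rowsq_def by (rule suminf_of_real[OF row_summable[OF assms], symmetric])
  finally show ?thesis .
qed

lemma colsq_nonneg: "x \<in> S_space \<Longrightarrow> 0 \<le> colsq x l"
  unfolding colsq_def by (rule suminf_nonneg[OF col_summable]) auto
lemma rowsq_nonneg: "x \<in> S_space \<Longrightarrow> 0 \<le> rowsq x l"
  unfolding rowsq_def by (rule suminf_nonneg[OF row_summable]) auto

lemma cmod_of_nonneg: "0 \<le> s \<Longrightarrow> cmod (complex_of_real s) = s"
  by simp

lemma sum_mat_apply: "(\<Sum>j\<in>F. (f j :: mat)) a b = (\<Sum>j\<in>F. f j a b)"
  by (simp add: sum_fun_apply2)

lemma diagA: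
  assumes "finite F" "\<And>j. j \<in> F \<Longrightarrow> x j \<in> S_space"
  shows "(\<Sum>j\<in>F. colsq (x j) l) * real (Suc l) ^ N * real (Suc l) ^ N
           \<le> Snorm N (\<Sum>j\<in>F. mmult (madj (x j)) (x j))"
proof -
  have S: "(\<Sum>j\<in>F. mmult (madj (x j)) (x j)) \<in> S_space"
    by (rule S_sum) (use assms in \<open>auto intro: S_mmult S_madj\<close>)
  have e: "(\<Sum>j\<in>F. mmult (madj (x j)) (x j)) l l = complex_of_real (\<Sum>j\<in>F. colsq (x j) l)"
    unfolding sum_mat_apply using assms(2) by (simp add: adj_diag1)
  have n: "cmod (complex_of_real (\<Sum>j\<in>F. colsq (x j) l)) = (\<Sum>j\<in>F. colsq (x j) l)"
    by (rule cmod_of_nonneg) (use assms(2) in \<open>auto intro!: sum_nonneg colsq_nonneg\<close>)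
  show ?thesis using entry_le[OF S, of l l N] unfolding e n .
qed

lemma diagB:
  assumes "finite F" "\<And>j. j \<in> F \<Longrightarrow> x j \<in> S_space"
  shows "(\<Sum>j\<in>F. rowsq (x j) l) * real (Suc l) ^ N * real (Suc l) ^ N
           \<le> Snorm N (\<Sum>j\<in>F. mmult (x j) (madj (x j)))"
proof -
  have S: "(\<Sum>j\<in>F. mmult (x j) (madj (x j))) \<in> S_space"
    by (rule S_sum) (use assms in \<open>auto intro: S_mmult S_madj\<close>)
  have e: "(\<Sum>j\<in>F. mmult (x j) (madj (x j))) l l = complex_of_real (\<Sum>j\<in>F. rowsq (x j) l)"
    unfolding sum_mat_apply using assms(2) by (simp add: adj_diag2)
  have n: "cmod (complex_of_real (\<Sum>j\<in>F. rowsq (x j) l)) = (\<Sum>j\<in>F. rowsq (x j) l)"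
    by (rule cmod_of_nonneg) (use assms(2) in \<open>auto intro!: sum_nonneg rowsq_nonneg\<close>)
  show ?thesis using entry_le[OF S, of l l N] unfolding e n .
qed

lemma diagM:
  assumes "finite F" "\<And>j. j \<in> F \<Longrightarrow> x j \<in> S_space"
  shows "(\<Sum>j\<in>F. (colsq (x j) l + rowsq (x j) l) / 2) * real (Suc l) ^ N * real (Suc l) ^ N
           \<le> Snorm N (\<Sum>j\<in>F. msq (x j))"
proof -
  have S: "(\<Sum>j\<in>F. msq (x j)) \<in> S_space"
    by (rule S_sum) (use assms in \<open>auto intro: S_msq\<close>)
  have e1: "msq (x j) l l = complex_of_real ((colsq (x j) l + rowsq (x j) l) / 2)" if "j \<in> F" for j
    using assms(2)[OF that] by (simp add: msq_def adj_diag1 adj_diag2)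
  have e: "(\<Sum>j\<in>F. msq (x j)) l l = complex_of_real (\<Sum>j\<in>F. (colsq (x j) l + rowsq (x j) l) / 2)"
  proof -
    have "(\<Sum>j\<in>F. msq (x j)) l l = (\<Sum>j\<in>F. complex_of_real ((colsq (x j) l + rowsq (x j) l) / 2))"
      unfolding sum_mat_apply by (rule sum.cong[OF refl e1])
    thus ?thesis by (simp only: of_real_sum)
  qed
  have n: "cmod (complex_of_real (\<Sum>j\<in>F. (colsq (x j) l + rowsq (x j) l) / 2)) = (\<Sum>j\<in>F. (colsq (x j) l + rowsq (x j) l) / 2)"
    by (rule cmod_of_nonneg) (use assms(2) in \<open>auto intro!: sum_nonneg divide_nonneg_nonneg add_nonneg_nonneg colsq_nonneg rowsq_nonneg\<close>)
  show ?thesis using entry_le[OF S, of l l N] unfolding e n .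
qed

lemma cs_final:
  assumes "\<And>j. j \<in> F \<Longrightarrow> 0 \<le> a j \<and> a j \<le> sqrt (U j) \<and> 0 \<le> U j"
      and "\<And>j. j \<in> F \<Longrightarrow> 0 \<le> b j \<and> b j \<le> sqrt (V j) \<and> 0 \<le> V j"
  shows "(\<Sum>j\<in>F. a j * b j) \<le> sqrt (\<Sum>j\<in>F. U j) * sqrt (\<Sum>j\<in>F. V j)"
proof -
  have "(\<Sum>j\<in>F. a j * b j) \<le> (\<Sum>j\<in>F. sqrt (U j) * sqrt (V j))"
    by (intro sum_mono mult_mono) (use assms in auto)
  also have "\<dots> \<le> sqrt ((\<Sum>j\<in>F. U j) * (\<Sum>j\<in>F. V j))"
  proof (rule real_le_rsqrt)
    have "(\<Sum>j\<in>F. sqrt (U j) * sqrt (V j))\<^sup>2 \<le> (\<Sum>j\<in>F. (sqrt (U j))\<^sup>2) * (\<Sum>j\<in>F. (sqrt (V j))\<^sup>2)"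
      by (rule Cauchy_Schwarz_ineq_sum)
    also have "\<dots> = (\<Sum>j\<in>F. U j) * (\<Sum>j\<in>F. V j)"
      using assms by (simp cong: sum.cong)
    finally show "(\<Sum>j\<in>F. sqrt (U j) * sqrt (V j))\<^sup>2 \<le> (\<Sum>j\<in>F. U j) * (\<Sum>j\<in>F. V j)" .
  qed
  finally show ?thesis by (simp add: real_sqrt_mult)
qed

lemma zero_mat_eq: "(\<lambda>i j. 0 * y i j) = (0::mat)"
  by (simp add: fun_eq_iff)

lemma bil_zero:
  assumes u: "cont_bilinear u" and x: "x \<in> S_space" and y: "y \<in> S_space"
  shows "u 0 y = 0" "u x 0 = 0"
proof -
  have lin: "u (\<lambda>i j. c * a i j) b = c * u a b \<and> u b (\<lambda>i j. c * a i j) = c * u b a"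
    if "a \<in> S_space" "b \<in> S_space" for a b c
    using u that unfolding cont_bilinear_def by blast
  show "u 0 y = 0" using lin[OF y y, of 0] unfolding zero_mat_eq by simp
  show "u x 0 = 0" using lin[OF x x, of 0] unfolding zero_mat_eq by simp
qed

lemma Snorm_zero_le: "Snorm n (0::mat) \<le> 1"
proof -
  have "T n 0 I \<le> 0" for I by (simp add: T_def)
  hence "Snorm n (0::mat) \<le> sqrt 0" by (rule Snorm_le(1)[OF S_zero])
  thus ?thesis by simp
qed

lemma bil_bound:
  assumes u: "cont_bilinear u" and x: "x \<in> S_space" and y: "y \<in> S_space"
    and b: "\<And>x y. x \<in> S_space \<Longrightarrow> y \<in> S_space \<Longrightarrow> Snorm n x \<le> 1 \<Longrightarrow> Snorm n y \<le> 1 \<Longrightarrow> cmod (u x y) \<le> b"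
  shows "cmod (u x y) \<le> b * Snorm n x * Snorm n y"
proof -
  have lin: "u (\<lambda>i j. c * a i j) b = c * u a b \<and> u b (\<lambda>i j. c * a i j) = c * u b a"
    if "a \<in> S_space" "b \<in> S_space" for a b c
    using u that unfolding cont_bilinear_def by blast
  define sx where "sx = Snorm n x"
  define sy where "sy = Snorm n y"
  have sx0: "0 \<le> sx" and sy0: "0 \<le> sy" using Snorm_nonneg x y by (auto simp: sx_def sy_def)
  show ?thesis
  proof (cases "sx = 0 \<or> sy = 0")
    case True
    then show ?thesis
    proof
      assume "sx = 0"
      hence "x = 0" using Snorm_zero_imp[OF x, of n] by (simp add: sx_def)
      thus ?thesis using bil_zero[OF u x y] \<open>sx = 0\<close> unfolding sx_def by simp
    next
      assume "sy = 0"
      hence "y = 0" using Snorm_zero_imp[OF y, of n] by (simp add: sy_def)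
      thus ?thesis using bil_zero[OF u x y] \<open>sy = 0\<close> unfolding sy_def by simp
    qed
  next
    case False
    hence px: "0 < sx" and py: "0 < sy" using sx0 sy0 by auto
    define x' where "x' = (\<lambda>i j. complex_of_real (1/sx) * x i j)"
    define y' where "y' = (\<lambda>i j. complex_of_real (1/sy) * y i j)"
    have x'S: "x' \<in> S_space" unfolding x'_def by (rule S_scale[OF x])
    have y'S: "y' \<in> S_space" unfolding y'_def by (rule S_scale[OF y])
    have nx: "Snorm n x' \<le> 1"
    proof -
      have "Snorm n x' \<le> cmod (complex_of_real (1/sx)) * sx"
        unfolding x'_def sx_def by (rule Snorm_scale[OF x])
      also have "\<dots> = 1" using px by (subst norm_of_real) simp
      finally show ?thesis .
    qed
    have ny: "Snorm n y' \<le> 1"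
    proof -
      have "Snorm n y' \<le> cmod (complex_of_real (1/sy)) * sy"
        unfolding y'_def sy_def by (rule Snorm_scale[OF y])
      also have "\<dots> = 1" using py by (subst norm_of_real) simp
      finally show ?thesis .
    qed
    have e1: "u x' y' = complex_of_real (1/sx) * u x y'"
      using lin[OF x y'S, of "complex_of_real (1/sx)"] unfolding x'_def by blast
    have e2: "u x y' = complex_of_real (1/sy) * u x y"
      using lin[OF y x, of "complex_of_real (1/sy)"] unfolding y'_def by blast
    have "cmod (u x' y') = cmod (complex_of_real (1/sx)) * (cmod (complex_of_real (1/sy)) * cmod (u x y))"
      unfolding e1 e2 by (simp only: norm_mult)
    also have "\<dots> = (1/sx) * ((1/sy) * cmod (u x y))"
      using px py by (simp only: norm_of_real abs_of_pos zero_less_divide_1_iff)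
    also have "\<dots> = cmod (u x y) / (sx * sy)" by simp
    finally have "cmod (u x' y') = cmod (u x y) / (sx * sy)" .
    hence "cmod (u x y) / (sx * sy) \<le> b" using b[OF x'S y'S nx ny] by simp
    hence "cmod (u x y) \<le> b * (sx * sy)" using px py by (simp add: pos_divide_le_eq)
    thus ?thesis by (simp add: sx_def sy_def mult.assoc)
  qed
qed

lemma fun_bound:
  assumes p: "\<phi> \<in> S_dual" and x: "x \<in> S_space"
    and b: "\<And>x. x \<in> S_space \<Longrightarrow> Snorm n x \<le> 1 \<Longrightarrow> cmod (\<phi> x) \<le> b"
  shows "cmod (\<phi> x) \<le> b * Snorm n x"
proof -
  have lin: "\<phi> (\<lambda>i j. c * a i j) = c * \<phi> a" if "a \<in> S_space" for a c
    using p that unfolding S_dual_def by blast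
  define sx where "sx = Snorm n x"
  have sx0: "0 \<le> sx" using Snorm_nonneg x by (auto simp: sx_def)
  show ?thesis
  proof (cases "sx = 0")
    case True
    hence "x = 0" using Snorm_zero_imp[OF x, of n] by (simp add: sx_def)
    moreover have "\<phi> 0 = 0" using lin[OF S_zero, of 0] unfolding zero_mat_eq by simp
    ultimately show ?thesis using True unfolding sx_def by simp
  next
    case False
    hence px: "0 < sx" using sx0 by auto
    define x' where "x' = (\<lambda>i j. complex_of_real (1/sx) * x i j)"
    have x'S: "x' \<in> S_space" unfolding x'_def by (rule S_scale[OF x])
    have nx: "Snorm n x' \<le> 1"
    proof -
      have "Snorm n x' \<le> cmod (complex_of_real (1/sx)) * sx"
        unfolding x'_def sx_def by (rule Snorm_scale[OF x])
      also have "\<dots> = 1" using px by (subst norm_of_real) simp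
      finally show ?thesis .
    qed
    have "\<phi> x' = complex_of_real (1/sx) * \<phi> x" unfolding x'_def by (rule lin[OF x])
    hence "cmod (\<phi> x') = cmod (complex_of_real (1/sx)) * cmod (\<phi> x)" by (simp only: norm_mult)
    also have "\<dots> = (1/sx) * cmod (\<phi> x)"
      using px by (simp only: norm_of_real abs_of_pos zero_less_divide_1_iff)
    finally have "cmod (\<phi> x') = cmod (\<phi> x) / sx" by simp
    hence "cmod (\<phi> x) / sx \<le> b" using b[OF x'S nx] by simp
    thus ?thesis using px by (simp add: pos_divide_le_eq sx_def)
  qed
qed



lemma rc_nonneg:
  assumes xS: "\<And>j. j \<in> {1..m} \<Longrightarrow> x j \<in> S_space"
  shows "0 \<le> rcnorm k m x"
proof -
  have SA: "(\<Sum>j\<in>{1..m}. mmult (madj (x j)) (x j)) \<in> S_space"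
    by (rule S_sum) (use xS in \<open>auto intro: S_mmult S_madj\<close>)
  show ?thesis unfolding rcnorm_def using Snorm_nonneg[OF SA, of k] by (simp add: le_max_iff_disj)
qed

lemma rc_core:
  assumes xS: "\<And>j. j \<in> {1..m} \<Longrightarrow> x j \<in> S_space"
  shows "\<exists>U. (\<forall>j\<in>{1..m}. 0 \<le> U j \<and> Snorm n (x j) \<le> sqrt (U j))
            \<and> (\<Sum>j\<in>{1..m}. U j) \<le> pi\<^sup>2 / 6 * (rcnorm (2*n+1) m x)\<^sup>2"
proof (rule core)
  show "finite {1..m}" by simp
  show "\<And>j. j \<in> {1..m} \<Longrightarrow> x j \<in> S_space" by (rule xS)
  fix l
  let ?N = "2*n+1"
  let ?A = "(\<Sum>j\<in>{1..m}. mmult (madj (x j)) (x j))"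
  let ?B = "(\<Sum>j\<in>{1..m}. mmult (x j) (madj (x j)))"
  let ?w = "real (Suc l) ^ ?N * real (Suc l) ^ ?N"
  have SA: "?A \<in> S_space" by (rule S_sum) (use xS in \<open>auto intro: S_mmult S_madj\<close>)
  have SB: "?B \<in> S_space" by (rule S_sum) (use xS in \<open>auto intro: S_mmult S_madj\<close>)
  have a: "(\<Sum>j\<in>{1..m}. colsq (x j) l) * ?w \<le> Snorm ?N ?A"
    using diagA[of "{1..m}" x l ?N] xS by (simp add: mult.assoc)
  have b: "(\<Sum>j\<in>{1..m}. rowsq (x j) l) * ?w \<le> Snorm ?N ?B"
    using diagB[of "{1..m}" x l ?N] xS by (simp add: mult.assoc)
  have RA: "Snorm ?N ?A \<le> (rcnorm ?N m x)\<^sup>2"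
  proof -
    have "sqrt (Snorm ?N ?A) \<le> rcnorm ?N m x" unfolding rcnorm_def by simp
    hence "(sqrt (Snorm ?N ?A))\<^sup>2 \<le> (rcnorm ?N m x)\<^sup>2" using Snorm_nonneg[OF SA] by (intro power_mono) auto
    thus ?thesis using Snorm_nonneg[OF SA] by simp
  qed
  have RB: "Snorm ?N ?B \<le> (rcnorm ?N m x)\<^sup>2"
  proof -
    have "sqrt (Snorm ?N ?B) \<le> rcnorm ?N m x" unfolding rcnorm_def by simp
    hence "(sqrt (Snorm ?N ?B))\<^sup>2 \<le> (rcnorm ?N m x)\<^sup>2" using Snorm_nonneg[OF SB] by (intro power_mono) auto
    thus ?thesis using Snorm_nonneg[OF SB] by simp
  qed
  have "(\<Sum>j\<in>{1..m}. (colsq (x j) l + rowsq (x j) l) / 2) * real (Suc l) ^ ?N * real (Suc l) ^ ?N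
      = ((\<Sum>j\<in>{1..m}. colsq (x j) l) + (\<Sum>j\<in>{1..m}. rowsq (x j) l)) / 2 * real (Suc l) ^ ?N * real (Suc l) ^ ?N"
    by (simp only: sum_divide_distrib[symmetric] sum.distrib)
  also have "\<dots> = ((\<Sum>j\<in>{1..m}. colsq (x j) l) * ?w + (\<Sum>j\<in>{1..m}. rowsq (x j) l) * ?w) / 2"
    by (simp add: algebra_simps)
  also have "\<dots> \<le> ((rcnorm ?N m x)\<^sup>2 + (rcnorm ?N m x)\<^sup>2) / 2"
    by (rule divide_right_mono[OF add_mono[OF order_trans[OF a RA] order_trans[OF b RB]]]) simp
  also have "\<dots> = (rcnorm ?N m x)\<^sup>2" by simp
  finally show "(\<Sum>j\<in>{1..m}. (colsq (x j) l + rowsq (x j) l) / 2) * real (Suc l) ^ (2*n+1) * real (Suc l) ^ (2*n+1)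
      \<le> (rcnorm (2*n+1) m x)\<^sup>2" .
qed

lemma rc_coreE:
  assumes xS: "\<And>j. j \<in> {1..m} \<Longrightarrow> x j \<in> S_space"
  obtains U where "\<forall>j\<in>{1..m}. 0 \<le> U j \<and> Snorm n (x j) \<le> sqrt (U j)"
    "(\<Sum>j\<in>{1..m}. U j) \<le> pi\<^sup>2 / 6 * (rcnorm (2*n+1) m x)\<^sup>2"
proof -
  have "\<exists>U. (\<forall>j\<in>{1..m}. 0 \<le> U j \<and> Snorm n (x j) \<le> sqrt (U j))
            \<and> (\<Sum>j\<in>{1..m}. U j) \<le> pi\<^sup>2 / 6 * (rcnorm (2*n+1) m x)\<^sup>2"
    by (rule rc_core[OF xS])
  then obtain U where UU: "(\<forall>j\<in>{1..m}. 0 \<le> U j \<and> Snorm n (x j) \<le> sqrt (U j))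
            \<and> (\<Sum>j\<in>{1..m}. U j) \<le> pi\<^sup>2 / 6 * (rcnorm (2*n+1) m x)\<^sup>2" ..
  show thesis by (rule that[OF conjunct1[OF UU] conjunct2[OF UU]])
qed

lemma rc_zero:
  assumes xS: "\<And>j. j \<in> {1..m} \<Longrightarrow> x j \<in> S_space" and R: "rcnorm (2*n+1) m x = 0"
    and j: "j \<in> {1..m}"
  shows "x j = 0"
proof -
  have "\<exists>U. (\<forall>j\<in>{1..m}. 0 \<le> U j \<and> Snorm n (x j) \<le> sqrt (U j))
            \<and> (\<Sum>j\<in>{1..m}. U j) \<le> pi\<^sup>2 / 6 * (rcnorm (2*n+1) m x)\<^sup>2"
    by (rule rc_core[OF xS])
  then obtain U where UU: "(\<forall>j\<in>{1..m}. 0 \<le> U j \<and> Snorm n (x j) \<le> sqrt (U j))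
            \<and> (\<Sum>j\<in>{1..m}. U j) \<le> pi\<^sup>2 / 6 * (rcnorm (2*n+1) m x)\<^sup>2" ..
  have U1: "\<forall>j\<in>{1..m}. 0 \<le> U j \<and> Snorm n (x j) \<le> sqrt (U j)" using UU by (rule conjunct1)
  have U2: "(\<Sum>j\<in>{1..m}. U j) \<le> pi\<^sup>2 / 6 * (rcnorm (2*n+1) m x)\<^sup>2" using UU by (rule conjunct2)
  have s0: "(\<Sum>j\<in>{1..m}. U j) \<le> 0" using U2 unfolding R by simp
  have nn: "\<And>i. i \<in> {1..m} \<Longrightarrow> 0 \<le> U i" using U1 by blast
  have "U j \<le> (\<Sum>j\<in>{1..m}. U j)"
    by (rule member_le_sum[OF j nn]) simp_all
  hence "U j \<le> 0" using s0 by linarith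
  hence sq: "sqrt (U j) \<le> 0" by simp
  have "Snorm n (x j) \<le> sqrt (U j)" using U1 j by blast
  hence "Snorm n (x j) \<le> 0" using sq by linarith
  thus "x j = 0" by (rule Snorm_zero_imp[OF xS[OF j]])
qed

lemma pair_bound:
  assumes xS: "\<And>j. j \<in> {1..m} \<Longrightarrow> x j \<in> S_space" and yS: "\<And>j. j \<in> {1..m} \<Longrightarrow> y j \<in> S_space"
  shows "(\<Sum>j\<in>{1..m}. Snorm n (x j) * Snorm n (y j))
           \<le> pi\<^sup>2 / 6 * rcnorm (2*n+1) m x * rcnorm (2*n+1) m y"
proof -
  let ?K = "pi\<^sup>2 / 6 :: real"
  let ?Rx = "rcnorm (2*n+1) m x" and ?Ry = "rcnorm (2*n+1) m y"
  obtain U where U: "\<forall>j\<in>{1..m}. 0 \<le> U j \<and> Snorm n (x j) \<le> sqrt (U j)"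
    "(\<Sum>j\<in>{1..m}. U j) \<le> ?K * ?Rx\<^sup>2"
    by (rule rc_coreE[OF xS])
  obtain V where V: "\<forall>j\<in>{1..m}. 0 \<le> V j \<and> Snorm n (y j) \<le> sqrt (V j)"
    "(\<Sum>j\<in>{1..m}. V j) \<le> ?K * ?Ry\<^sup>2"
    by (rule rc_coreE[OF yS])
  have "(\<Sum>j\<in>{1..m}. Snorm n (x j) * Snorm n (y j)) \<le> sqrt (\<Sum>j\<in>{1..m}. U j) * sqrt (\<Sum>j\<in>{1..m}. V j)"
    by (rule cs_final) (use U(1) V(1) Snorm_nonneg xS yS in auto)
  also have "\<dots> \<le> sqrt (?K * ?Rx\<^sup>2) * sqrt (?K * ?Ry\<^sup>2)"
  proof -
    have "0 \<le> (\<Sum>j\<in>{1..m}. V j)" by (rule sum_nonneg) (use V(1) in blast)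
    thus ?thesis by (intro mult_mono real_sqrt_le_mono U(2) V(2)) auto
  qed
  also have "\<dots> = ?K * ?Rx * ?Ry"
  proof -
    have Rx0: "0 \<le> ?Rx" by (rule rc_nonneg) (rule xS)
    have Ry0: "0 \<le> ?Ry" by (rule rc_nonneg) (rule yS)
    have "sqrt (?K * ?Rx\<^sup>2) * sqrt (?K * ?Ry\<^sup>2) = (sqrt ?K * ?Rx) * (sqrt ?K * ?Ry)"
      using Rx0 Ry0 by (simp only: real_sqrt_mult real_sqrt_abs abs_of_nonneg)
    also have "\<dots> = (sqrt ?K * sqrt ?K) * ?Rx * ?Ry" by (simp only: mult_ac)
    also have "sqrt ?K * sqrt ?K = ?K" by simp
    finally show ?thesis .
  qed
  finally show ?thesis .
qed

lemma sq_bound: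
  assumes xS: "\<And>j. j \<in> {1..m} \<Longrightarrow> x j \<in> S_space"
  shows "(\<Sum>j\<in>{1..m}. (Snorm n (x j))\<^sup>2) \<le> pi\<^sup>2 / 6 * (rcnorm (2*n+1) m x)\<^sup>2"
proof -
  obtain U where U: "\<forall>j\<in>{1..m}. 0 \<le> U j \<and> Snorm n (x j) \<le> sqrt (U j)"
    "(\<Sum>j\<in>{1..m}. U j) \<le> pi\<^sup>2 / 6 * (rcnorm (2*n+1) m x)\<^sup>2"
    by (rule rc_coreE[OF xS])
  have "(\<Sum>j\<in>{1..m}. (Snorm n (x j))\<^sup>2) \<le> (\<Sum>j\<in>{1..m}. U j)"
  proof (rule sum_mono)
    fix j assume j: "j \<in> {1..m}"
    have "(Snorm n (x j))\<^sup>2 \<le> (sqrt (U j))\<^sup>2"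
      by (rule power_mono) (use U(1) j Snorm_nonneg[OF xS[OF j]] in auto)
    thus "(Snorm n (x j))\<^sup>2 \<le> U j" using U(1) j by simp
  qed
  thus ?thesis using U(2) by linarith
qed



lemma coreM_E:
  fixes x :: "nat \<Rightarrow> mat"
  assumes xS: "\<And>j. j \<in> {1..m} \<Longrightarrow> x j \<in> S_space"
  obtains U where "\<forall>j\<in>{1..m}. 0 \<le> U j \<and> Snorm n (x j) \<le> sqrt (U j)"
    "(\<Sum>j\<in>{1..m}. U j) \<le> pi\<^sup>2 / 6 * Snorm (2*n+1) (\<Sum>j\<in>{1..m}. msq (x j))"
proof -
  have "\<exists>U. (\<forall>j\<in>{1..m}. 0 \<le> U j \<and> Snorm n (x j) \<le> sqrt (U j))
            \<and> (\<Sum>j\<in>{1..m}. U j) \<le> pi\<^sup>2 / 6 * Snorm (2*n+1) (\<Sum>j\<in>{1..m}. msq (x j))"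
  proof (rule core[where F="{1..m}" and x=x and n=n and D="Snorm (2*n+1) (\<Sum>j\<in>{1..m}. msq (x j))"])
    show "finite {1..m}" by simp
    show "\<And>j. j \<in> {1..m} \<Longrightarrow> x j \<in> S_space" by (rule xS)
    fix l
    show "(\<Sum>j\<in>{1..m}. (colsq (x j) l + rowsq (x j) l) / 2) * real (Suc l) ^ (2*n+1) * real (Suc l) ^ (2*n+1)
        \<le> Snorm (2*n+1) (\<Sum>j\<in>{1..m}. msq (x j))"
      by (rule diagM) (simp_all add: xS)
  qed
  then obtain U where UU: "(\<forall>j\<in>{1..m}. 0 \<le> U j \<and> Snorm n (x j) \<le> sqrt (U j))
            \<and> (\<Sum>j\<in>{1..m}. U j) \<le> pi\<^sup>2 / 6 * Snorm (2*n+1) (\<Sum>j\<in>{1..m}. msq (x j))" ..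
  show thesis by (rule that[OF conjunct1[OF UU] conjunct2[OF UU]])
qed

lemma SM_nonneg:
  fixes x :: "nat \<Rightarrow> mat"
  assumes xS: "\<And>j. j \<in> {1..m} \<Longrightarrow> x j \<in> S_space"
  shows "0 \<le> Snorm k (\<Sum>j\<in>{1..m}. msq (x j))"
proof -
  have "(\<Sum>j\<in>{1..m}. msq (x j)) \<in> S_space" by (rule S_sum) (use xS in \<open>auto intro: S_msq\<close>)
  thus ?thesis by (rule Snorm_nonneg)
qed

lemma pairM:
  fixes x y :: "nat \<Rightarrow> mat"
  assumes xS: "\<And>j. j \<in> {1..m} \<Longrightarrow> x j \<in> S_space" and yS: "\<And>j. j \<in> {1..m} \<Longrightarrow> y j \<in> S_space"
  shows "(\<Sum>j\<in>{1..m}. Snorm n (x j) * Snorm n (y j))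
     \<le> pi\<^sup>2 / 6 * (sqrt (Snorm (2*n+1) (\<Sum>j\<in>{1..m}. msq (x j))) * sqrt (Snorm (2*n+1) (\<Sum>j\<in>{1..m}. msq (y j))))"
proof -
  let ?K = "pi\<^sup>2 / 6 :: real"
  let ?Mx = "Snorm (2*n+1) (\<Sum>j\<in>{1..m}. msq (x j))" and ?My = "Snorm (2*n+1) (\<Sum>j\<in>{1..m}. msq (y j))"
  obtain U where U: "\<forall>j\<in>{1..m}. 0 \<le> U j \<and> Snorm n (x j) \<le> sqrt (U j)"
    "(\<Sum>j\<in>{1..m}. U j) \<le> ?K * ?Mx"
    by (rule coreM_E[OF xS])
  obtain V where V: "\<forall>j\<in>{1..m}. 0 \<le> V j \<and> Snorm n (y j) \<le> sqrt (V j)"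
    "(\<Sum>j\<in>{1..m}. V j) \<le> ?K * ?My"
    by (rule coreM_E[OF yS])
  have "(\<Sum>j\<in>{1..m}. Snorm n (x j) * Snorm n (y j)) \<le> sqrt (\<Sum>j\<in>{1..m}. U j) * sqrt (\<Sum>j\<in>{1..m}. V j)"
    by (rule cs_final) (use U(1) V(1) Snorm_nonneg xS yS in auto)
  also have "\<dots> \<le> sqrt (?K * ?Mx) * sqrt (?K * ?My)"
  proof -
    have "0 \<le> (\<Sum>j\<in>{1..m}. V j)" by (rule sum_nonneg) (use V(1) in blast)
    moreover have "0 \<le> ?Mx" by (rule SM_nonneg) (rule xS)
    ultimately show ?thesis by (intro mult_mono real_sqrt_le_mono U(2) V(2)) auto
  qed
  also have "\<dots> = (sqrt ?K * sqrt ?K) * (sqrt ?Mx * sqrt ?My)"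
    by (simp only: real_sqrt_mult mult_ac)
  also have "sqrt ?K * sqrt ?K = ?K" by simp
  finally show ?thesis .
qed

lemma partA:
  assumes z: "z \<in> SS_tensor"
  shows "pi_norm n z \<le> 2 * (pi\<^sup>2 / 6) * ah_norm (2*n+1) z"
proof -
  let ?K = "pi\<^sup>2 / 6 :: real"
  have Kpos: "0 < ?K" by simp
  define P where "P = {(\<Sum>j\<in>{1..m}. Snorm n (x j) * Snorm n (y j)) | m x y. (m, x, y) \<in> reps z}"
  define Q where "Q = {sqrt (Snorm (2*n+1) (\<Sum>j\<in>{1..m}. msq (x j))) * sqrt (Snorm (2*n+1) (\<Sum>j\<in>{1..m}. msq (y j)))
                      | m x y. (m, x, y) \<in> reps z}"
  have pi: "pi_norm n z = Inf P" by (simp add: pi_norm_def P_def)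
  have ah: "ah_norm (2*n+1) z = Inf Q" by (simp add: ah_norm_def Q_def)
  have repsS: "\<And>j. j \<in> {1..m} \<Longrightarrow> x j \<in> S_space \<and> y j \<in> S_space" if "(m, x, y) \<in> reps z" for m x y
    using that unfolding reps_def by blast
  obtain r where r: "r \<in> reps z" using z unfolding SS_tensor_def by blast
  obtain m0 x0 y0 where r0: "r = (m0, x0, y0)" by (cases r) blast
  have Qne: "Q \<noteq> {}" unfolding Q_def using r r0 by blast
  have Pbdd: "bdd_below P"
  proof (rule bdd_belowI)
    fix p assume "p \<in> P"
    then obtain m x y where p: "p = (\<Sum>j\<in>{1..m}. Snorm n (x j) * Snorm n (y j))" and rr: "(m, x, y) \<in> reps z"
      unfolding P_def by blast
    show "0 \<le> p" unfolding p
      by (intro sum_nonneg mult_nonneg_nonneg Snorm_nonneg) (use repsS[OF rr] in auto)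
  qed
  have key: "Inf P / ?K \<le> q" if qQ: "q \<in> Q" for q
  proof -
    obtain m x y where q: "q = sqrt (Snorm (2*n+1) (\<Sum>j\<in>{1..m}. msq (x j))) * sqrt (Snorm (2*n+1) (\<Sum>j\<in>{1..m}. msq (y j)))"
      and rr: "(m, x, y) \<in> reps z"
      using qQ unfolding Q_def by blast
    have xS: "\<And>j. j \<in> {1..m} \<Longrightarrow> x j \<in> S_space" using repsS[OF rr] by blast
    have yS: "\<And>j. j \<in> {1..m} \<Longrightarrow> y j \<in> S_space" using repsS[OF rr] by blast
    have inP: "(\<Sum>j\<in>{1..m}. Snorm n (x j) * Snorm n (y j)) \<in> P" unfolding P_def using rr by blast
    have "Inf P \<le> (\<Sum>j\<in>{1..m}. Snorm n (x j) * Snorm n (y j))" by (rule cInf_lower[OF inP Pbdd])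
    also have "\<dots> \<le> ?K * q" unfolding q by (rule pairM[OF xS yS])
    finally show ?thesis using Kpos by (simp add: pos_divide_le_eq mult.commute)
  qed
  have q0: "0 \<le> q" if qQ: "q \<in> Q" for q
  proof -
    obtain m x y where q: "q = sqrt (Snorm (2*n+1) (\<Sum>j\<in>{1..m}. msq (x j))) * sqrt (Snorm (2*n+1) (\<Sum>j\<in>{1..m}. msq (y j)))"
      and rr: "(m, x, y) \<in> reps z"
      using qQ unfolding Q_def by blast
    have xS: "\<And>j. j \<in> {1..m} \<Longrightarrow> x j \<in> S_space" using repsS[OF rr] by blast
    have yS: "\<And>j. j \<in> {1..m} \<Longrightarrow> y j \<in> S_space" using repsS[OF rr] by blast
    have a: "0 \<le> Snorm (2*n+1) (\<Sum>j\<in>{1..m}. msq (x j))" by (rule SM_nonneg) (rule xS)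
    have b: "0 \<le> Snorm (2*n+1) (\<Sum>j\<in>{1..m}. msq (y j))" by (rule SM_nonneg) (rule yS)
    show ?thesis unfolding q using a b by simp
  qed
  have A: "Inf P / ?K \<le> Inf Q" by (rule cInf_greatest[OF Qne key])
  have B: "0 \<le> Inf Q" by (rule cInf_greatest[OF Qne q0])
  have "Inf P \<le> ?K * Inf Q" using A Kpos by (simp add: pos_divide_le_eq mult.commute)
  also have "\<dots> \<le> 2 * ?K * Inf Q" using B Kpos by (simp add: mult_right_mono)
  finally show ?thesis unfolding pi ah .
qed



lemma partB:
  fixes x y :: "nat \<Rightarrow> mat"
  assumes u: "cont_bilinear u" and xy: "\<forall>j\<in>{1..m}. x j \<in> S_space \<and> y j \<in> S_space"
  shows "ereal (cmod (\<Sum>j\<in>{1..m}. u (x j) (y j)))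
          \<le> ereal (pi\<^sup>2 / 6) * bnorm_star n u * ereal (rcnorm (2*n+1) m x) * ereal (rcnorm (2*n+1) m y)"
proof -
  let ?K = "pi\<^sup>2 / 6 :: real"
  let ?Rx = "rcnorm (2*n+1) m x" and ?Ry = "rcnorm (2*n+1) m y"
  have Kpos: "0 < ?K" by simp
  have xS: "\<And>j. j \<in> {1..m} \<Longrightarrow> x j \<in> S_space" using xy by blast
  have yS: "\<And>j. j \<in> {1..m} \<Longrightarrow> y j \<in> S_space" using xy by blast
  have Rx0: "0 \<le> ?Rx" by (rule rc_nonneg) (rule xS)
  have Ry0: "0 \<le> ?Ry" by (rule rc_nonneg) (rule yS)
  have upper: "ereal (cmod (u a c)) \<le> bnorm_star n u"
    if "a \<in> S_space" "c \<in> S_space" "Snorm n a \<le> 1" "Snorm n c \<le> 1" for a c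
    unfolding bnorm_star_def by (rule Sup_upper) (use that in blast)
  have bn0: "0 \<le> bnorm_star n u"
    using upper[OF S_zero S_zero Snorm_zero_le Snorm_zero_le] bil_zero(1)[OF u S_zero S_zero] by (simp add: zero_ereal_def)
  have RHS0: "0 \<le> ereal ?K * bnorm_star n u * ereal ?Rx * ereal ?Ry"
    using bn0 Rx0 Ry0 Kpos by (intro ereal_0_le_mult) auto
  have sumS: "(\<Sum>j\<in>{1..m}. Snorm n (x j) * Snorm n (y j)) \<le> ?K * ?Rx * ?Ry"
    by (rule pair_bound) (simp_all add: xS yS)
  show ?thesis
  proof (cases "bnorm_star n u")
    case (real b)
    have bd: "cmod (u a c) \<le> b" if "a \<in> S_space" "c \<in> S_space" "Snorm n a \<le> 1" "Snorm n c \<le> 1" for a c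
      using upper[OF that] real by simp
    have b0: "0 \<le> b" using bn0 real by simp
    have "cmod (\<Sum>j\<in>{1..m}. u (x j) (y j)) \<le> (\<Sum>j\<in>{1..m}. cmod (u (x j) (y j)))"
      by (rule norm_sum)
    also have "\<dots> \<le> (\<Sum>j\<in>{1..m}. b * Snorm n (x j) * Snorm n (y j))"
      by (intro sum_mono bil_bound[OF u _ _ bd]) (simp_all add: xS yS)
    also have "\<dots> = b * (\<Sum>j\<in>{1..m}. Snorm n (x j) * Snorm n (y j))"
      by (simp add: sum_distrib_left mult.assoc)
    also have "\<dots> \<le> b * (?K * ?Rx * ?Ry)"
      by (rule mult_left_mono[OF sumS b0])
    finally have le: "cmod (\<Sum>j\<in>{1..m}. u (x j) (y j)) \<le> ?K * b * ?Rx * ?Ry" by (simp add: mult_ac)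
    have "ereal ?K * bnorm_star n u * ereal ?Rx * ereal ?Ry = ereal (?K * b * ?Rx * ?Ry)"
      using real by simp
    thus ?thesis using le by simp
  next
    case PInf
    show ?thesis
    proof (cases "?Rx = 0 \<or> ?Ry = 0")
      case True
      have "u (x j) (y j) = 0" if j: "j \<in> {1..m}" for j
        using True
      proof
        assume R: "?Rx = 0"
        have "x j = 0" by (rule rc_zero[where n=n and m=m and x=x]) (use xS R j in auto)
        thus ?thesis using bil_zero(1)[OF u xS[OF j] yS[OF j]] by simp
      next
        assume R: "?Ry = 0"
        have "y j = 0" by (rule rc_zero[where n=n and m=m and x=y]) (use yS R j in auto)
        thus ?thesis using bil_zero(2)[OF u xS[OF j] yS[OF j]] by simp
      qed
      hence "(\<Sum>j\<in>{1..m}. u (x j) (y j)) = 0" by simp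
      thus ?thesis using RHS0 by (simp add: zero_ereal_def)
    next
      case False
      hence "0 < ?Rx" "0 < ?Ry" using Rx0 Ry0 by auto
      hence "ereal ?K * bnorm_star n u * ereal ?Rx * ereal ?Ry = \<infinity>"
        using PInf Kpos by simp
      show ?thesis unfolding \<open>ereal ?K * bnorm_star n u * ereal ?Rx * ereal ?Ry = \<infinity>\<close> by simp
    qed
  next
    case MInf
    thus ?thesis using bn0 by simp
  qed
qed

lemma dual_zero: "\<phi> \<in> S_dual \<Longrightarrow> \<phi> 0 = 0"
proof -
  assume p: "\<phi> \<in> S_dual"
  have "\<phi> (\<lambda>i j. 0 * (0::mat) i j) = 0 * \<phi> 0"
    using p S_zero unfolding S_dual_def by blast
  thus ?thesis unfolding zero_mat_eq by simp
qed

lemma partC: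
  fixes x :: "nat \<Rightarrow> mat"
  assumes p: "\<phi> \<in> S_dual" and xs: "\<forall>j\<in>{1..m}. x j \<in> S_space"
  shows "ereal (\<Sum>j\<in>{1..m}. (cmod (\<phi> (x j)))\<^sup>2)
          \<le> ereal (pi\<^sup>2 / 6) * (fnorm_star n \<phi> * ereal (rcnorm (2*n+1) m x))\<^sup>2"
proof -
  let ?K = "pi\<^sup>2 / 6 :: real"
  let ?R = "rcnorm (2*n+1) m x"
  have Kpos: "0 < ?K" by simp
  have xS: "\<And>j. j \<in> {1..m} \<Longrightarrow> x j \<in> S_space" using xs by blast
  have R0: "0 \<le> ?R" by (rule rc_nonneg) (rule xS)
  have upper: "ereal (cmod (\<phi> a)) \<le> fnorm_star n \<phi>"
    if "a \<in> S_space" "Snorm n a \<le> 1" for a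
    unfolding fnorm_star_def by (rule Sup_upper) (use that in blast)
  have fn0: "0 \<le> fnorm_star n \<phi>"
    using upper[OF S_zero Snorm_zero_le] dual_zero[OF p] by (simp add: zero_ereal_def)
  have sq: "(\<Sum>j\<in>{1..m}. (Snorm n (x j))\<^sup>2) \<le> ?K * ?R\<^sup>2"
    by (rule sq_bound) (simp add: xS)
  show ?thesis
  proof (cases "fnorm_star n \<phi>")
    case (real f)
    have bd: "cmod (\<phi> a) \<le> f" if "a \<in> S_space" "Snorm n a \<le> 1" for a
      using upper[OF that] real by simp
    have f0: "0 \<le> f" using fn0 real by simp
    have "(\<Sum>j\<in>{1..m}. (cmod (\<phi> (x j)))\<^sup>2) \<le> (\<Sum>j\<in>{1..m}. (f * Snorm n (x j))\<^sup>2)"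
    proof (rule sum_mono)
      fix j assume j: "j \<in> {1..m}"
      show "(cmod (\<phi> (x j)))\<^sup>2 \<le> (f * Snorm n (x j))\<^sup>2"
        by (rule power_mono[OF fun_bound[OF p xS[OF j] bd]]) auto
    qed
    also have "\<dots> = f\<^sup>2 * (\<Sum>j\<in>{1..m}. (Snorm n (x j))\<^sup>2)"
      by (simp add: sum_distrib_left power_mult_distrib)
    also have "\<dots> \<le> f\<^sup>2 * (?K * ?R\<^sup>2)"
      by (rule mult_left_mono[OF sq]) simp
    finally have le: "(\<Sum>j\<in>{1..m}. (cmod (\<phi> (x j)))\<^sup>2) \<le> ?K * (f * ?R)\<^sup>2"
      by (simp add: power_mult_distrib mult_ac)
    have "ereal ?K * (fnorm_star n \<phi> * ereal ?R)\<^sup>2 = ereal (?K * (f * ?R)\<^sup>2)"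
      using real by (simp add: power2_eq_square)
    thus ?thesis using le by simp
  next
    case PInf
    show ?thesis
    proof (cases "?R = 0")
      case True
      have "\<phi> (x j) = 0" if j: "j \<in> {1..m}" for j
      proof -
        have "x j = 0" by (rule rc_zero[where n=n and m=m and x=x]) (use xS True j in auto)
        thus ?thesis using dual_zero[OF p] by simp
      qed
      hence "(\<Sum>j\<in>{1..m}. (cmod (\<phi> (x j)))\<^sup>2) = 0" by simp
      moreover have "ereal ?K * (fnorm_star n \<phi> * ereal ?R)\<^sup>2 = 0"
        using True PInf by (simp add: power2_eq_square)
      ultimately show ?thesis by simp
    next
      case False
      hence "0 < ?R" using R0 by auto
      hence "ereal ?K * (fnorm_star n \<phi> * ereal ?R)\<^sup>2 = \<infinity>"
        using PInf Kpos by (simp add: power2_eq_square)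
      show ?thesis unfolding \<open>ereal ?K * (fnorm_star n \<phi> * ereal ?R)\<^sup>2 = \<infinity>\<close> by simp
    qed
  next
    case MInf
    thus ?thesis using fn0 by simp
  qed
qed

theorem theorem2p3:
  shows "\<exists>K::real. K \<le> pi\<^sup>2 / 6 \<and>
    (\<forall>n\<ge>1. \<forall>z\<in>SS_tensor. pi_norm n z \<le> 2 * K * ah_norm (2*n+1) z) \<and>
    (\<forall>u n m (x::nat \<Rightarrow> mat) (y::nat \<Rightarrow> mat). cont_bilinear u \<and> n \<ge> 1 \<and> m \<ge> 1 \<and>
        (\<forall>j\<in>{1..m}. x j \<in> S_space \<and> y j \<in> S_space) \<longrightarrow>
        ereal (cmod (\<Sum>j\<in>{1..m}. u (x j) (y j)))
          \<le> ereal K * bnorm_star n u * ereal (rcnorm (2*n+1) m x) * ereal (rcnorm (2*n+1) m y)) \<and>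
    (\<forall>\<phi> n m (x::nat \<Rightarrow> mat). \<phi> \<in> S_dual \<and> n \<ge> 1 \<and> m \<ge> 1 \<and>
        (\<forall>j\<in>{1..m}. x j \<in> S_space) \<longrightarrow>
        ereal (\<Sum>j\<in>{1..m}. (cmod (\<phi> (x j)))\<^sup>2)
          \<le> ereal K * (fnorm_star n \<phi> * ereal (rcnorm (2*n+1) m x))\<^sup>2)"
proof (rule exI[of _ "pi\<^sup>2 / 6"], intro conjI)
  show "pi\<^sup>2 / 6 \<le> pi\<^sup>2 / 6" by (rule order_refl)
  show "\<forall>n\<ge>1. \<forall>z\<in>SS_tensor. pi_norm n z \<le> 2 * (pi\<^sup>2 / 6) * ah_norm (2*n+1) z"
  proof (intro allI impI ballI)
    fix n :: nat and z assume "z \<in> SS_tensor"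
    thus "pi_norm n z \<le> 2 * (pi\<^sup>2 / 6) * ah_norm (2*n+1) z" by (rule partA)
  qed
  show "\<forall>u n m (x::nat \<Rightarrow> mat) (y::nat \<Rightarrow> mat). cont_bilinear u \<and> n \<ge> 1 \<and> m \<ge> 1 \<and>
        (\<forall>j\<in>{1..m}. x j \<in> S_space \<and> y j \<in> S_space) \<longrightarrow>
        ereal (cmod (\<Sum>j\<in>{1..m}. u (x j) (y j)))
          \<le> ereal (pi\<^sup>2 / 6) * bnorm_star n u * ereal (rcnorm (2*n+1) m x) * ereal (rcnorm (2*n+1) m y)"
  proof (intro allI impI)
    fix u and n m :: nat and x y :: "nat \<Rightarrow> mat"
    assume h: "cont_bilinear u \<and> n \<ge> 1 \<and> m \<ge> 1 \<and> (\<forall>j\<in>{1..m}. x j \<in> S_space \<and> y j \<in> S_space)"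
    show "ereal (cmod (\<Sum>j\<in>{1..m}. u (x j) (y j)))
          \<le> ereal (pi\<^sup>2 / 6) * bnorm_star n u * ereal (rcnorm (2*n+1) m x) * ereal (rcnorm (2*n+1) m y)"
      by (rule partB) (use h in blast)+
  qed
  show "\<forall>\<phi> n m (x::nat \<Rightarrow> mat). \<phi> \<in> S_dual \<and> n \<ge> 1 \<and> m \<ge> 1 \<and>
        (\<forall>j\<in>{1..m}. x j \<in> S_space) \<longrightarrow>
        ereal (\<Sum>j\<in>{1..m}. (cmod (\<phi> (x j)))\<^sup>2)
          \<le> ereal (pi\<^sup>2 / 6) * (fnorm_star n \<phi> * ereal (rcnorm (2*n+1) m x))\<^sup>2"
  proof (intro allI impI)
    fix \<phi> and n m :: nat and x :: "nat \<Rightarrow> mat"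
    assume h: "\<phi> \<in> S_dual \<and> n \<ge> 1 \<and> m \<ge> 1 \<and> (\<forall>j\<in>{1..m}. x j \<in> S_space)"
    show "ereal (\<Sum>j\<in>{1..m}. (cmod (\<phi> (x j)))\<^sup>2)
          \<le> ereal (pi\<^sup>2 / 6) * (fnorm_star n \<phi> * ereal (rcnorm (2*n+1) m x))\<^sup>2"
      by (rule partC) (use h in blast)+
  qed
qed

end
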